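(* Let $\Phi=[\phi_k : k\in\mathbb{Z}]$ be the semi-regular Dubuc–Deslauriers $2n$-point scaling functions (defined in the context). Then: (i) $\Phi$ is a Riesz basis for $\overline{\mathrm{span}(\Phi)}^{L^2}$, i.e. there exist $0<A\le B<\infty$ such that $A\|\mathbf{f}\|_{\ell^2}^2\le\|\Phi^T\mathbf{f}\|_{L^2}^2\le B\|\mathbf{f}\|_{\ell^2}^2$ for all $\mathbf{f}\in\ell^2(\mathbb{Z})$, where $\Phi^T\mathbf{f}=\sum_k\mathbf{f}(k)\phi_k$; (ii) $\Phi$ is uniformly bounded: $\sup_{k\in\mathbb{Z}}\|\phi_k\|_{L^\infty}<\infty$; (iii) $\Phi$ is strictly local: $\sup_{k\in\mathbb{Z}}|\mathrm{supp}(\phi_k)|<\infty$, and there exists $s\in\mathbb{N}$ such that for every index set $\mathcal{I}\subset\mathbb{Z}$ with $|\mathcal{I}|>s$ one has $\bigcap_{k\in\mathcal{I}}\mathrm{supp}(\phi_k)=\emptyset$; (iv) $\lim_{j\to\infty}\sup_{k\in\mathbb{Z}}|\mathrm{supp}\,\phi_k(2^j\cdot)|=0$.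
   Context: Fix $n\in\mathbb{N}$, $h_\ell,h_r>0$, and the mesh $\mathbf{t}(k)=kh_\ell$ for $k<0$, $\mathbf{t}(k)=kh_r$ for $k\ge0$. Let $\mathbf{P}$ be the bi-infinite matrix with $\mathbf{P}(2k,k)=1$; for each $k$, $\mathbf{P}(2k+1,j)$, $j=k-n+1,\dots,k+n$, the unique numbers with $\sum_{j=k-n+1}^{k+n}\mathbf{P}(2k+1,j)\mathbf{t}(j)^\alpha=(\mathbf{t}(2k+1)/2)^\alpha$, $\alpha=0,\dots,2n-1$; all other entries $0$ (semi-regular Dubuc–Deslauriers $2n$-point scheme). This scheme is convergent: for each $k\in\mathbb{Z}$ there is a continuous function $\varphi_k$ (basic limit function) which is the uniform limit as $j\to\infty$ of the piecewise linear interpolants of the data $(2^{-j}\mathbf{t}(m),(\mathbf{P}^j\delta_k)(m))_{m\in\mathbb{Z}}$, $\delta_k$ the unit sequence at $k$. Standing assumption: $h_\ell,h_r$ are such that $\int_{\mathbb{R}}\varphi_k(x)\,dx>0$ for all $k\in\mathbb{Z}$. Let $\mathbf{D}=\mathrm{diag}\big(\int_{\mathbb{R}}\varphi_k\big)_{k\in\mathbb{Z}}$ and define the scaling functions $\Phi=[\phi_k:k\in\mathbb{Z}]=\mathbf{D}^{-1/2}[\varphi_k:k\in\mathbb{Z}]$, i.e. $\phi_k=\varphi_k/\sqrt{\int_{\mathbb{R}}\varphi_k}$. *)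

theory Defs
  imports "HOL-Analysis.Analysis"
begin

definition mesh :: "real \<Rightarrow> real \<Rightarrow> int \<Rightarrow> real" where
  "mesh hl hr k = (if k < 0 then real_of_int k * hl else real_of_int k * hr)"

text \<open>Odd row 2k+1 of the subdivision matrix: the unique weights supported on
  {k-n+1..k+n} reproducing polynomials of degree < 2n at t(2k+1)/2.\<close>
definition DD_row :: "real \<Rightarrow> real \<Rightarrow> nat \<Rightarrow> int \<Rightarrow> (int \<Rightarrow> real)" where
  "DD_row hl hr n k = (THE w. (\<forall>j. j \<notin> {k - int n + 1 .. k + int n} \<longrightarrow> w j = 0) \<and>
      (\<forall>\<alpha><2*n. (\<Sum>j\<in>{k - int n + 1 .. k + int n}. w j * mesh hl hr j ^ \<alpha>)
                 = (mesh hl hr (2*k+1) / 2) ^ \<alpha>))"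

definition DD_mat :: "real \<Rightarrow> real \<Rightarrow> nat \<Rightarrow> int \<Rightarrow> int \<Rightarrow> real" where
  "DD_mat hl hr n m j =
     (if even m then (if j = m div 2 then 1 else 0) else DD_row hl hr n (m div 2) j)"

text \<open>Application of P to a bi-infinite sequence; row m has nonzero entries only
  for j in {m div 2 - n + 1 .. m div 2 + n}, so this is the matrix-vector product.\<close>
definition DD_apply :: "real \<Rightarrow> real \<Rightarrow> nat \<Rightarrow> (int \<Rightarrow> real) \<Rightarrow> (int \<Rightarrow> real)" where
  "DD_apply hl hr n v m = (\<Sum>j\<in>{m div 2 - int n + 1 .. m div 2 + int n}. DD_mat hl hr n m j * v j)"

definition unit_seq :: "int \<Rightarrow> int \<Rightarrow> real" where
  "unit_seq k m = (if m = k then 1 else 0)"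

text \<open>Piecewise linear interpolant of data (xs m, c m), xs strictly increasing and
  unbounded in both directions.\<close>
definition pwlin :: "(int \<Rightarrow> real) \<Rightarrow> (int \<Rightarrow> real) \<Rightarrow> real \<Rightarrow> real" where
  "pwlin xs c x = (let m = (THE m. xs m \<le> x \<and> x < xs (m+1)) in
      c m + (c (m+1) - c m) * (x - xs m) / (xs (m+1) - xs m))"

definition DD_level :: "real \<Rightarrow> real \<Rightarrow> nat \<Rightarrow> nat \<Rightarrow> (int \<Rightarrow> real) \<Rightarrow> real \<Rightarrow> real" where
  "DD_level hl hr n j v = pwlin (\<lambda>m. mesh hl hr m / 2 ^ j) ((DD_apply hl hr n ^^ j) v)"

definition fsupp :: "(real \<Rightarrow> real) \<Rightarrow> real set" where
  "fsupp f = closure {x. f x \<noteq> 0}"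

definition scaling_fun :: "(int \<Rightarrow> real \<Rightarrow> real) \<Rightarrow> int \<Rightarrow> real \<Rightarrow> real" where
  "scaling_fun \<phi> k x = \<phi> k x / sqrt (integral UNIV (\<phi> k))"

end

theory Submission
  imports Defs "HOL-Computational_Algebra.Polynomial"
begin

lemma moment_unique:
  fixes x :: "int \<Rightarrow> real"
  assumes fin: "finite S" and inj: "inj_on x S" and N: "card S = N"
    and mom: "\<And>\<alpha>. \<alpha> < N \<Longrightarrow> (\<Sum>j\<in>S. d j * x j ^ \<alpha>) = 0"
    and j0: "j0 \<in> S"
  shows "d j0 = 0"
proof -
  define p where "p = (\<Prod>m\<in>S-{j0}. [:- x m, 1:])"
  have "degree p \<le> sum (degree \<circ> (\<lambda>m. [:- x m, 1:])) (S - {j0})"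
    unfolding p_def by (rule degree_prod_sum_le) (use fin in auto)
  also have "\<dots> = card (S - {j0})" by simp
  also have "\<dots> < N" using N j0 fin by (metis card_Diff1_less)
  finally have deg: "degree p < N" .
  have "(\<Sum>j\<in>S. d j * poly p (x j)) = (\<Sum>j\<in>S. \<Sum>i\<le>degree p. d j * (coeff p i * x j ^ i))"
    by (simp add: poly_altdef sum_distrib_left)
  also have "\<dots> = (\<Sum>i\<le>degree p. coeff p i * (\<Sum>j\<in>S. d j * x j ^ i))"
    by (subst sum.swap) (simp add: sum_distrib_left mult_ac)
  also have "\<dots> = 0" using mom deg by simp
  finally have s0: "(\<Sum>j\<in>S. d j * poly p (x j)) = 0" .
  have pj: "poly p (x j) = (\<Prod>m\<in>S-{j0}. x j - x m)" for j
    unfolding p_def by (simp add: poly_prod)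
  have z: "poly p (x j) = 0" if "j \<in> S" "j \<noteq> j0" for j
  proof -
    have "j \<in> S - {j0}" using that by auto
    then show ?thesis unfolding pj using fin by (auto intro: prod_zero)
  qed
  have nz: "poly p (x j0) \<noteq> 0"
    unfolding pj using fin inj j0 by (auto simp: prod_zero_iff inj_on_def)
  have "(\<Sum>j\<in>S. d j * poly p (x j)) = d j0 * poly p (x j0)"
    by (rule sum.remove[OF fin j0, THEN trans]) (simp add: z)
  with s0 nz show ?thesis by simp
qed

lemma moment_exists:
  fixes x :: "int \<Rightarrow> real"
  assumes fin: "finite S" and inj: "inj_on x S" and N: "card S = N"
  shows "\<exists>w. (\<forall>j. j \<notin> S \<longrightarrow> w j = 0) \<and> (\<forall>\<alpha><N. (\<Sum>j\<in>S. w j * x j ^ \<alpha>) = y ^ \<alpha>)"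
proof -
  define L where "L j = smult (1 / (\<Prod>m\<in>S-{j}. x j - x m)) (\<Prod>m\<in>S-{j}. [:- x m, 1:])" for j
  have polyL: "poly (L j) z = (\<Prod>m\<in>S-{j}. z - x m) / (\<Prod>m\<in>S-{j}. x j - x m)" for j z
    unfolding L_def by (simp add: poly_prod)
  have Lnode: "poly (L j) (x i) = (if i = j then 1 else 0)" if "i \<in> S" "j \<in> S" for i j
  proof (cases "i = j")
    case True
    have "(\<Prod>m\<in>S-{j}. x j - x m) \<noteq> 0"
      using fin inj that by (auto simp: prod_zero_iff inj_on_def)
    then show ?thesis using True polyL by simp
  next
    case False
    have "(\<Prod>m\<in>S-{j}. x i - x m) = 0"
      apply (rule prod_zero) using fin that False by auto
    then show ?thesis using False polyL by simp
  qed
  have degL: "degree (L j) \<le> N - 1" if "j \<in> S" for j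
  proof -
    have "degree (L j) \<le> degree (\<Prod>m\<in>S-{j}. [:- x m, 1:])" unfolding L_def by (rule degree_smult_le)
    also have "\<dots> \<le> sum (degree \<circ> (\<lambda>m. [:- x m, 1:])) (S - {j})"
      by (rule degree_prod_sum_le) (use fin in auto)
    also have "\<dots> = card (S - {j})" by simp
    also have "\<dots> = N - 1" using N that fin by simp
    finally show ?thesis .
  qed
  define w where "w j = (if j \<in> S then poly (L j) y else 0)" for j
  have "(\<Sum>j\<in>S. w j * x j ^ \<alpha>) = y ^ \<alpha>" if "\<alpha> < N" for \<alpha>
  proof -
    define Q where "Q = (\<Sum>j\<in>S. smult (x j ^ \<alpha>) (L j))"
    have "Q = monom 1 \<alpha>"
    proof (rule poly_eqI_degree[where A = "x ` S"])
      fix z assume "z \<in> x ` S"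
      then obtain i where i: "i \<in> S" "z = x i" by auto
      have "poly Q z = (\<Sum>j\<in>S. x j ^ \<alpha> * poly (L j) (x i))"
        unfolding Q_def i by (simp add: poly_sum)
      also have "\<dots> = (\<Sum>j\<in>S. if j = i then x j ^ \<alpha> else 0)"
        by (rule sum.cong) (auto simp: Lnode i)
      also have "\<dots> = x i ^ \<alpha>" using i fin by simp
      finally show "poly Q z = poly (monom 1 \<alpha>) z" using i by (simp add: poly_monom)
    next
      have cS: "card (x ` S) = N" using card_image[OF inj] N by simp
      have "degree Q \<le> N - 1" unfolding Q_def
        by (rule degree_sum_le[OF fin]) (meson degL degree_smult_le order_trans)
      then show "degree Q < card (x ` S)" using cS that by linarith
      show "degree (monom (1::real) \<alpha>) < card (x ` S)" using cS that degree_monom_le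
        by (metis le_less_trans)
    qed
    then have "poly Q y = y ^ \<alpha>" by (simp add: poly_monom)
    moreover have "poly Q y = (\<Sum>j\<in>S. w j * x j ^ \<alpha>)"
      unfolding Q_def w_def by (auto simp: poly_sum mult_ac intro: sum.cong)
    ultimately show ?thesis by simp
  qed
  then show ?thesis by (intro exI[of _ w]) (auto simp: w_def)
qed

lemma moment_shift:
  fixes x :: "int \<Rightarrow> real"
  assumes fin: "finite S" and mom: "\<And>\<alpha>. \<alpha> < N \<Longrightarrow> (\<Sum>j\<in>S. w j * x j ^ \<alpha>) = y ^ \<alpha>"
    and a: "\<alpha> < N"
  shows "(\<Sum>j\<in>S. w j * (x j + d) ^ \<alpha>) = (y + d) ^ \<alpha>"
proof -
  have "(\<Sum>j\<in>S. w j * (x j + d) ^ \<alpha>) =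
        (\<Sum>j\<in>S. \<Sum>b\<le>\<alpha>. of_nat (\<alpha> choose b) * d ^ (\<alpha> - b) * (w j * x j ^ b))"
    by (simp add: binomial_ring sum_distrib_left mult_ac)
  also have "\<dots> = (\<Sum>b\<le>\<alpha>. of_nat (\<alpha> choose b) * d ^ (\<alpha> - b) * (\<Sum>j\<in>S. w j * x j ^ b))"
    by (subst sum.swap) (simp add: sum_distrib_left)
  also have "\<dots> = (\<Sum>b\<le>\<alpha>. of_nat (\<alpha> choose b) * y ^ b * d ^ (\<alpha> - b))"
    using a mom by (intro sum.cong) auto
  also have "\<dots> = (y + d) ^ \<alpha>" by (simp add: binomial_ring)
  finally show ?thesis .
qed


lemma sum_shift_int: "(\<Sum>l\<in>{a..b::int}. f l) = (\<Sum>l\<in>{a-c..b-c}. f (l + c))"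
  by (rule sum.reindex_bij_witness[of _ "\<lambda>l. l + c" "\<lambda>l. l - c"]) auto

locale dd =
  fixes hl hr :: real and n :: nat
  assumes hl: "hl > 0" and hr: "hr > 0" and n1: "n \<ge> 1"
begin

abbreviation t :: "int \<Rightarrow> real" where "t \<equiv> mesh hl hr"

lemma t_nonneg: "i \<ge> 0 \<Longrightarrow> t i = of_int i * hr" by (simp add: mesh_def)
lemma t_nonpos: "i \<le> 0 \<Longrightarrow> t i = of_int i * hl" by (auto simp: mesh_def)

lemma t_strict: assumes "a < b" shows "t a < t b"
proof -
  have ab: "real_of_int a < of_int b" using assms by simp
  consider "b \<le> 0" | "a \<le> 0" "0 \<le> b" | "0 \<le> a" by linarith
  then show ?thesis
  proof cases
    case 1 then show ?thesis using assms t_nonpos[of a] t_nonpos[of b] hl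
      by (simp add: mult_strict_right_mono)
  next
    case 2 then show ?thesis using assms t_nonpos[of a] t_nonneg[of b] hl hr
      by (smt (verit, best) mult_nonneg_nonneg mult_nonpos_nonneg of_int_0_le_iff of_int_le_0_iff mult_strict_right_mono ab)
  next
    case 3 then show ?thesis using assms t_nonneg[of a] t_nonneg[of b] hr
      by (simp add: mult_strict_right_mono)
  qed
qed

lemma t_less_iff: "t a < t b \<longleftrightarrow> a < b"
  by (metis t_strict less_asym linorder_neqE less_irrefl)
lemma t_le_iff: "t a \<le> t b \<longleftrightarrow> a \<le> b"
  using t_less_iff[of b a] by linarith
lemma t_inj: "inj_on t S"
  by (rule inj_onI) (metis t_less_iff not_less_iff_gr_or_eq)

lemma t_mult: assumes "c > 0" shows "t (c * m) = of_int c * t m"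
  using assms by (auto simp: mesh_def mult_less_0_iff)

lemma t_diff: assumes "a \<le> b" shows "t b - t a \<le> of_int (b - a) * (hl + hr)"
proof -
  have "t b - t a \<le> of_int (b - a) * max hl hr"
  proof -
    consider "b \<le> 0" | "a \<le> 0" "0 \<le> b" | "0 \<le> a" by linarith
    then show ?thesis
    proof cases
      case 1
      then have "t b - t a = of_int (b - a) * hl" using t_nonpos[of a] t_nonpos[of b] assms
        by (simp add: algebra_simps)
      then show ?thesis using assms by (simp add: mult_left_mono)
    next
      case 2
      then have "t b - t a = of_int b * hr + of_int (- a) * hl" using t_nonpos[of a] t_nonneg[of b]
        by (simp add: algebra_simps)
      also have "\<dots> \<le> of_int b * max hl hr + of_int (- a) * max hl hr"
        using 2 by (intro add_mono mult_left_mono) auto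
      finally show ?thesis by (simp add: algebra_simps)
    next
      case 3
      then have "t b - t a = of_int (b - a) * hr" using t_nonneg[of a] t_nonneg[of b] assms
        by (simp add: algebra_simps)
      then show ?thesis using assms by (simp add: mult_left_mono)
    qed
  qed
  also have "\<dots> \<le> of_int (b - a) * (hl + hr)"
    using assms hl hr by (intro mult_left_mono) auto
  finally show ?thesis .
qed

definition Sk :: "int \<Rightarrow> int set" where "Sk k = {k - int n + 1 .. k + int n}"

lemma card_Sk: "card (Sk k) = 2 * n" unfolding Sk_def by simp
lemma fin_Sk: "finite (Sk k)" unfolding Sk_def by simp

definition Rc :: "int \<Rightarrow> (int \<Rightarrow> real) \<Rightarrow> bool" where
  "Rc k w \<longleftrightarrow> (\<forall>j. j \<notin> Sk k \<longrightarrow> w j = 0) \<and>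
      (\<forall>\<alpha><2*n. (\<Sum>j\<in>Sk k. w j * t j ^ \<alpha>) = (t (2*k+1) / 2) ^ \<alpha>)"

lemma row_ex1: "\<exists>!w. Rc k w"
proof -
  obtain w where w: "(\<forall>j. j \<notin> Sk k \<longrightarrow> w j = 0) \<and>
      (\<forall>\<alpha><2*n. (\<Sum>j\<in>Sk k. w j * t j ^ \<alpha>) = (t (2*k+1) / 2) ^ \<alpha>)"
    using moment_exists[OF fin_Sk t_inj card_Sk] by blast
  have "w' = w" if "Rc k w'" for w'
  proof
    fix j
    show "w' j = w j"
    proof (cases "j \<in> Sk k")
      case True
      have "(\<lambda>j. w' j - w j) j = 0"
      proof (rule moment_unique[OF fin_Sk t_inj card_Sk _ True])
        fix \<alpha> :: nat assume "\<alpha> < 2 * n"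
        then show "(\<Sum>j\<in>Sk k. (w' j - w j) * t j ^ \<alpha>) = 0"
          using that w unfolding Rc_def by (simp add: left_diff_distrib sum_subtractf)
      qed
      then show ?thesis by simp
    next
      case False then show ?thesis using that w unfolding Rc_def by simp
    qed
  qed
  moreover have "Rc k w" using w unfolding Rc_def by simp
  ultimately show ?thesis by blast
qed

lemma row_def': "DD_row hl hr n k = (THE w. Rc k w)"
  unfolding DD_row_def Rc_def Sk_def ..

lemma row_Rc: "Rc k (DD_row hl hr n k)"
  unfolding row_def' by (rule theI'[OF row_ex1])

lemma row_eq: "Rc k w \<Longrightarrow> DD_row hl hr n k = w"
  unfolding row_def' by (rule the1_equality[OF row_ex1])

lemma row_zero: "j \<notin> Sk k \<Longrightarrow> DD_row hl hr n k j = 0"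
  using row_Rc[of k] unfolding Rc_def by blast

lemma row_shift:
  assumes h1: "\<And>l. l \<in> Sk k \<Longrightarrow> t l = of_int l * h"
    and h1': "\<And>l. l \<in> Sk (k+c) \<Longrightarrow> t l = of_int l * h"
    and h2: "t (2*k+1) = of_int (2*k+1) * h" and h3: "t (2*(k+c)+1) = of_int (2*(k+c)+1) * h"
  shows "DD_row hl hr n (k+c) (l + c) = DD_row hl hr n k l"
proof -
  define w where "w = DD_row hl hr n k"
  have Rw: "Rc k w" unfolding w_def by (rule row_Rc)
  have "Rc (k+c) (\<lambda>l. w (l - c))"
    unfolding Rc_def
  proof (intro conjI allI impI)
    fix j assume "j \<notin> Sk (k+c)"
    then have "j - c \<notin> Sk k" unfolding Sk_def by auto
    then show "w (j - c) = 0" using Rw unfolding Rc_def by blast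
  next
    fix \<alpha> :: nat assume a: "\<alpha> < 2*n"
    have "(\<Sum>j\<in>Sk (k+c). w (j - c) * t j ^ \<alpha>) = (\<Sum>j\<in>Sk k. w j * t (j + c) ^ \<alpha>)"
      unfolding Sk_def by (subst sum_shift_int[where c = c]) (simp add: algebra_simps)
    also have "\<dots> = (\<Sum>j\<in>Sk k. w j * (t j + of_int c * h) ^ \<alpha>)"
    proof (rule sum.cong[OF refl])
      fix j assume j: "j \<in> Sk k"
      have "j + c \<in> Sk (k+c)" using j unfolding Sk_def by auto
      then have "t (j + c) = of_int (j + c) * h" by (rule h1')
      then show "w j * t (j + c) ^ \<alpha> = w j * (t j + of_int c * h) ^ \<alpha>"
        using h1[OF j] by (simp add: algebra_simps)
    qed
    also have "\<dots> = (t (2*k+1) / 2 + of_int c * h) ^ \<alpha>"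
      using Rw a unfolding Rc_def by (intro moment_shift[OF fin_Sk]) auto
    also have "\<dots> = (t (2*(k+c)+1) / 2) ^ \<alpha>"
      unfolding h2 h3 by (rule arg_cong[where f="\<lambda>z. z^\<alpha>"]) (simp add: field_simps)
    finally show "(\<Sum>j\<in>Sk (k+c). w (j - c) * t j ^ \<alpha>) = (t (2*(k+c)+1) / 2) ^ \<alpha>" .
  qed
  then have "DD_row hl hr n (k+c) = (\<lambda>l. w (l - c))" by (rule row_eq)
  then show ?thesis unfolding w_def by simp
qed

end

context dd begin

lemma row_right:
  assumes k: "k \<ge> int n - 1" and c: "c \<ge> 0"
  shows "DD_row hl hr n (k+c) (l + c) = DD_row hl hr n k l"
proof (rule row_shift[where h = hr])
  show "t l = of_int l * hr" if "l \<in> Sk k" for l using that k by (intro t_nonneg) (auto simp: Sk_def)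
  show "t l = of_int l * hr" if "l \<in> Sk (k+c)" for l using that k c by (intro t_nonneg) (auto simp: Sk_def)
  show "t (2*k+1) = of_int (2*k+1) * hr" using k n1 by (intro t_nonneg) simp
  show "t (2*(k+c)+1) = of_int (2*(k+c)+1) * hr" using k c n1 by (intro t_nonneg) simp
qed

lemma row_left:
  assumes k: "k + c \<le> - int n - 1" and c: "c \<ge> 0"
  shows "DD_row hl hr n (k+c) (l + c) = DD_row hl hr n k l"
proof (rule row_shift[where h = hl])
  show "t l = of_int l * hl" if "l \<in> Sk k" for l using that k c by (intro t_nonpos) (auto simp: Sk_def)
  show "t l = of_int l * hl" if "l \<in> Sk (k+c)" for l using that k by (intro t_nonpos) (auto simp: Sk_def)
  show "t (2*k+1) = of_int (2*k+1) * hl" using k c n1 by (intro t_nonpos) simp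
  show "t (2*(k+c)+1) = of_int (2*(k+c)+1) * hl" using k c n1 by (intro t_nonpos) simp
qed

abbreviation P where "P \<equiv> DD_apply hl hr n"

lemma P_even: "P v (2*i) = v i"
proof -
  have "P v (2*i) = (\<Sum>l\<in>{i - int n + 1 .. i + int n}. (if l = i then v l else 0))"
    unfolding DD_apply_def DD_mat_def by (intro sum.cong) auto
  also have "\<dots> = v i" using n1 by simp
  finally show ?thesis .
qed

lemma P_odd: "P v (2*k+1) = (\<Sum>l\<in>Sk k. DD_row hl hr n k l * v l)"
proof -
  have d: "(2*k+1) div 2 = k" by simp
  show ?thesis unfolding DD_apply_def DD_mat_def d Sk_def by simp
qed

lemma int_parity_cases:
  fixes i :: int
  obtains k where "i = 2*k" | k where "i = 2*k+1"
proof -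
  have "i = 2*(i div 2) \<or> i = 2*(i div 2)+1" by presburger
  then show ?thesis using that by blast
qed

lemma P_zero_below:
  assumes v: "\<And>i. i < a \<Longrightarrow> v i = 0" and i: "i < 2*a - 2*int n + 1"
  shows "P v i = 0"
proof (cases i rule: int_parity_cases)
  case (1 k) then show ?thesis using v i n1 by (simp add: P_even)
next
  case (2 k)
  have "(\<Sum>l\<in>Sk k. DD_row hl hr n k l * v l) = 0"
    by (rule sum.neutral) (use v i 2 in \<open>auto simp: Sk_def\<close>)
  then show ?thesis using 2 P_odd by simp
qed

lemma P_zero_above:
  assumes v: "\<And>i. i > b \<Longrightarrow> v i = 0" and i: "i > 2*b + 2*int n - 1"
  shows "P v i = 0"
proof (cases i rule: int_parity_cases)
  case (1 k) then show ?thesis using v i n1 by (simp add: P_even)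
next
  case (2 k)
  have "(\<Sum>l\<in>Sk k. DD_row hl hr n k l * v l) = 0"
    by (rule sum.neutral) (use v i 2 in \<open>auto simp: Sk_def\<close>)
  then show ?thesis using 2 P_odd by simp
qed

lemma P_shift_right:
  assumes v: "\<And>i. i < a \<Longrightarrow> v i = 0" and a: "a \<ge> 2*int n - 1" and c: "c \<ge> 0"
  shows "P (\<lambda>i. v (i - c)) i = P v (i - 2*c)"
proof (cases i rule: int_parity_cases)
  case (1 k)
  have "i - 2*c = 2*(k-c)" using 1 by simp
  then show ?thesis using 1 P_even[of "\<lambda>i. v (i - c)" k] P_even[of v "k-c"] by simp
next
  case (2 k)
  have e: "i - 2*c = 2*(k-c)+1" using 2 by simp
  have "P v (i - 2*c) = (\<Sum>l\<in>Sk (k-c). DD_row hl hr n (k-c) l * v l)" unfolding e P_odd ..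
  also have "\<dots> = (\<Sum>l\<in>Sk k. DD_row hl hr n (k-c) (l - c) * v (l - c))"
    unfolding Sk_def by (subst sum_shift_int[where c = "-c"]) (simp add: algebra_simps)
  also have "\<dots> = (\<Sum>l\<in>Sk k. DD_row hl hr n k l * v (l - c))"
  proof (cases "k - c \<ge> int n - 1")
    case True
    show ?thesis
    proof (rule sum.cong[OF refl])
      fix l
      have "DD_row hl hr n ((k-c)+c) ((l-c)+c) = DD_row hl hr n (k-c) (l-c)"
        by (rule row_right[OF True c])
      then show "DD_row hl hr n (k-c) (l - c) * v (l - c) = DD_row hl hr n k l * v (l - c)" by simp
    qed
  next
    case False
    have "v (l - c) = 0" if "l \<in> Sk k" for l
      using that False a by (intro v) (auto simp: Sk_def)
    then show ?thesis by simp
  qed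
  also have "\<dots> = P (\<lambda>i. v (i - c)) i" unfolding 2 P_odd ..
  finally show ?thesis ..
qed

lemma P_shift_left:
  assumes v: "\<And>i. i > b \<Longrightarrow> v i = 0" and b: "b \<le> - 2*int n" and c: "c \<ge> 0"
  shows "P (\<lambda>i. v (i + c)) i = P v (i + 2*c)"
proof (cases i rule: int_parity_cases)
  case (1 k)
  have "i + 2*c = 2*(k+c)" using 1 by simp
  then show ?thesis using 1 P_even[of "\<lambda>i. v (i + c)" k] P_even[of v "k+c"] by simp
next
  case (2 k)
  have e: "i + 2*c = 2*(k+c)+1" using 2 by simp
  have "P v (i + 2*c) = (\<Sum>l\<in>Sk (k+c). DD_row hl hr n (k+c) l * v l)" unfolding e P_odd ..
  also have "\<dots> = (\<Sum>l\<in>Sk k. DD_row hl hr n (k+c) (l + c) * v (l + c))"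
    unfolding Sk_def by (subst sum_shift_int[where c = "c"]) (simp add: algebra_simps)
  also have "\<dots> = (\<Sum>l\<in>Sk k. DD_row hl hr n k l * v (l + c))"
  proof (cases "k + c \<le> - int n - 1")
    case True
    show ?thesis by (rule sum.cong[OF refl]) (simp add: row_left[OF True c])
  next
    case False
    have "v (l + c) = 0" if "l \<in> Sk k" for l
      using that False b by (intro v) (auto simp: Sk_def)
    then show ?thesis by simp
  qed
  also have "\<dots> = P (\<lambda>i. v (i + c)) i" unfolding 2 P_odd ..
  finally show ?thesis ..
qed

definition V :: "int \<Rightarrow> nat \<Rightarrow> int \<Rightarrow> real" where "V k j = (P ^^ j) (unit_seq k)"

lemma V_Suc: "V k (Suc j) = P (V k j)" unfolding V_def by simp
lemma V_0: "V k 0 = unit_seq k" unfolding V_def by simp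

lemma V_node: "V k j (2^j * m) = unit_seq k m"
proof (induction j arbitrary: m)
  case 0 then show ?case by (simp add: V_0)
next
  case (Suc j)
  have "V k (Suc j) (2^(Suc j) * m) = P (V k j) (2 * (2^j * m))" by (simp add: V_Suc mult_ac)
  also have "\<dots> = V k j (2^j * m)" by (rule P_even)
  finally show ?case using Suc by simp
qed

lemma V_below: "i < 2^j * (k - 2*int n + 1) + 2*int n - 1 \<Longrightarrow> V k j i = 0"
proof (induction j arbitrary: i)
  case 0 then show ?case by (simp add: V_0 unit_seq_def)
next
  case (Suc j)
  show ?case unfolding V_Suc
    by (rule P_zero_below[where a = "2^j * (k - 2*int n + 1) + 2*int n - 1"])
       (use Suc in \<open>auto simp: algebra_simps\<close>)
qed

lemma V_above: "i > 2^j * (k + 2*int n - 1) - 2*int n + 1 \<Longrightarrow> V k j i = 0"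
proof (induction j arbitrary: i)
  case 0 then show ?case by (simp add: V_0 unit_seq_def)
next
  case (Suc j)
  show ?case unfolding V_Suc
    by (rule P_zero_above[where b = "2^j * (k + 2*int n - 1) - 2*int n + 1"])
       (use Suc in \<open>auto simp: algebra_simps\<close>)
qed

lemma V_below': "i \<le> 2^j * (k - 2*int n + 1) \<Longrightarrow> V k j i = 0"
  using V_below n1 by force
lemma V_above': "i \<ge> 2^j * (k + 2*int n - 1) \<Longrightarrow> V k j i = 0"
  using V_above n1 by force

lemma V_right: assumes k: "k \<ge> 2*int n - 1" shows "V (k+1) j i = V k j (i - 2^j)"
proof (induction j arbitrary: i)
  case 0 then show ?case by (simp add: V_0 unit_seq_def)
next
  case (Suc j)
  have e: "V (k+1) j = (\<lambda>i. V k j (i - 2^j))" using Suc by auto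
  have "V k j i = 0" if "i < 2*int n - 1" for i
  proof (rule V_below)
    have "(2::int)^j * (k - 2*int n + 1) \<ge> 0" using k by simp
    then show "i < 2^j * (k - 2*int n + 1) + 2*int n - 1" using that by linarith
  qed
  then have "P (\<lambda>i. V k j (i - 2^j)) i = P (V k j) (i - 2 * 2^j)"
    by (intro P_shift_right[where a = "2*int n - 1"]) auto
  then show ?case unfolding V_Suc e by simp
qed

lemma V_left: assumes k: "k \<le> - 2*int n" shows "V (k-1) j i = V k j (i + 2^j)"
proof (induction j arbitrary: i)
  case 0 then show ?case by (simp add: V_0 unit_seq_def)
next
  case (Suc j)
  have e: "V (k-1) j = (\<lambda>i. V k j (i + 2^j))" using Suc by auto
  have "V k j i = 0" if "i > - 2*int n" for i
  proof (rule V_above)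
    have "(2::int)^j * (k + 2*int n - 1) \<le> -1"
    proof -
      have "(2::int)^j * (k + 2*int n - 1) \<le> (2::int)^j * (-1)" using k by (intro mult_left_mono) auto
      also have "\<dots> \<le> -1" by simp
      finally show ?thesis .
    qed
    then show "i > 2^j * (k + 2*int n - 1) - 2*int n + 1" using that by linarith
  qed
  then have "P (\<lambda>i. V k j (i + 2^j)) i = P (V k j) (i + 2 * 2^j)"
    by (intro P_shift_left[where b = "- 2*int n"]) auto
  then show ?case unfolding V_Suc e by simp
qed

end

context dd begin

lemma xs_less: fixes j :: nat shows "t a / 2^j < t b / 2^j \<longleftrightarrow> a < b"
  using t_less_iff[of a b] by (simp add: divide_less_cancel)
lemma xs_le: fixes j :: nat shows "t a / 2^j \<le> t b / 2^j \<longleftrightarrow> a \<le> b"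
  using t_le_iff[of a b] by (simp add: divide_le_cancel)

lemma cell_exists: fixes j :: nat shows "\<exists>m. t m / 2^j \<le> x \<and> x < t (m+1) / 2^j"
proof -
  define y where "y = x * 2^j"
  have "\<exists>m. t m \<le> y \<and> y < t (m+1)"
  proof (cases "y \<ge> 0")
    case True
    define m where "m = \<lfloor>y / hr\<rfloor>"
    have m0: "m \<ge> 0" using True hr unfolding m_def by simp
    have "of_int m \<le> y / hr" "y / hr < of_int m + 1" unfolding m_def by linarith+
    then have "of_int m * hr \<le> y" "y < (of_int m + 1) * hr" using hr by (simp_all add: field_simps)
    then show ?thesis using t_nonneg[of m] t_nonneg[of "m+1"] m0 by (intro exI[of _ m]) auto
  next
    case False
    define m where "m = \<lfloor>y / hl\<rfloor>"
    have m0: "m + 1 \<le> 0" using False hl unfolding m_def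
      by (metis add.commute divide_less_0_iff floor_less_zero int_one_le_iff_zero_less
          linorder_not_le zle_add1_eq_le)
    have "of_int m \<le> y / hl" "y / hl < of_int m + 1" unfolding m_def by linarith+
    then have "of_int m * hl \<le> y" "y < (of_int m + 1) * hl" using hl by (simp_all add: field_simps)
    then show ?thesis using t_nonpos[of m] t_nonpos[of "m+1"] m0 by (intro exI[of _ m]) auto
  qed
  then show ?thesis unfolding y_def by (simp add: field_simps)
qed

definition L :: "nat \<Rightarrow> (int \<Rightarrow> real) \<Rightarrow> real \<Rightarrow> real" where
  "L j c x = pwlin (\<lambda>m. t m / 2^j) c x"

lemma L_at:
  assumes "t m / 2^j \<le> x" "x < t (m+1) / 2^j"
  shows "L j c x = c m + (c (m+1) - c m) * (x - t m / 2^j) / (t (m+1) / 2^j - t m / 2^j)"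
proof -
  have "(THE m. t m / 2^j \<le> x \<and> x < t (m+1) / 2^j) = m"
  proof (rule the_equality)
    show "t m / 2^j \<le> x \<and> x < t (m+1) / 2^j" using assms by simp
  next
    fix m' assume m': "t m' / 2^j \<le> x \<and> x < t (m'+1) / 2^j"
    have "\<not> m' < m"
    proof
      assume "m' < m" then have "t (m'+1) / 2^j \<le> t m / 2^j" using xs_le by simp
      then show False using m' assms by linarith
    qed
    moreover have "\<not> m < m'"
    proof
      assume "m < m'" then have "t (m+1) / 2^j \<le> t m' / 2^j" using xs_le by simp
      then show False using m' assms by linarith
    qed
    ultimately show "m' = m" by linarith
  qed
  then show ?thesis unfolding L_def pwlin_def Let_def by simp
qed

lemma L_node: "L j c (t m / 2^j) = c m"
  by (subst L_at[of m]) (auto simp: xs_less)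

lemma L_zero_left:
  assumes c: "\<And>i. i \<le> A \<Longrightarrow> c i = 0" and x: "x \<le> t A / 2^j"
  shows "L j c x = 0"
proof -
  obtain m where m: "t m / 2^j \<le> x" "x < t (m+1) / 2^j" using cell_exists by blast
  have "m \<le> A" using m x xs_le[of m j A] by linarith
  show ?thesis
  proof (cases "m = A")
    case True
    then have "x = t m / 2^j" using m(1) x unfolding True by linarith
    then show ?thesis using L_node c True by simp
  next
    case False
    then show ?thesis using L_at[OF m] c \<open>m \<le> A\<close> by simp
  qed
qed

lemma L_zero_right:
  assumes c: "\<And>i. i \<ge> B \<Longrightarrow> c i = 0" and x: "x \<ge> t B / 2^j"
  shows "L j c x = 0"
proof -
  obtain m where m: "t m / 2^j \<le> x" "x < t (m+1) / 2^j" using cell_exists by blast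
  have "B < m + 1" using m x xs_less[of B j "m+1"] by linarith
  then show ?thesis using L_at[OF m] c by simp
qed

lemma level_eq: "DD_level hl hr n j (unit_seq k) = L j (V k j)"
  unfolding DD_level_def L_def V_def by (rule ext) simp

lemma t_pow: fixes j :: nat shows "t (2^j * m) / 2^j = t m"
  using t_mult[of "2^j" m] by simp

lemma lev_node: "DD_level hl hr n j (unit_seq k) (t m) = unit_seq k m"
  unfolding level_eq using L_node[of j "V k j" "2^j * m"] t_pow V_node by simp

lemma lev_zero:
  assumes "x \<le> t (k - 2*int n + 1) \<or> x \<ge> t (k + 2*int n - 1)"
  shows "DD_level hl hr n j (unit_seq k) x = 0"
  using assms
proof
  assume x: "x \<le> t (k - 2*int n + 1)"
  show ?thesis unfolding level_eq
    by (rule L_zero_left[where A = "2^j * (k - 2*int n + 1)"]) (use V_below' x t_pow in auto)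
next
  assume x: "x \<ge> t (k + 2*int n - 1)"
  show ?thesis unfolding level_eq
    by (rule L_zero_right[where B = "2^j * (k + 2*int n - 1)"]) (use V_above' x t_pow in auto)
qed

lemma lev_right:
  assumes k: "k \<ge> 2*int n - 1"
  shows "DD_level hl hr n j (unit_seq (k+1)) (x + hr) = DD_level hl hr n j (unit_seq k) x"
proof (cases "x < 0")
  case True
  have "t 1 \<le> t (k + 1 - 2*int n + 1)" using k by (subst t_le_iff) simp
  then have a: "x + hr \<le> t (k + 1 - 2*int n + 1)" using True t_nonneg[of 1] by simp
  have "0 \<le> t (k - 2*int n + 1)" using k t_le_iff[of 0 "k - 2*int n + 1"] by (simp add: mesh_def)
  then have b: "x \<le> t (k - 2*int n + 1)" using True by simp
  show ?thesis using lev_zero a b by simp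
next
  case False
  obtain m where m: "t m / 2^j \<le> x" "x < t (m+1) / 2^j" using cell_exists by blast
  have m0: "m \<ge> 0"
  proof (rule ccontr)
    assume "\<not> m \<ge> 0" then have "t (m+1) \<le> t 0" using t_le_iff by simp
    then have "t (m+1) / 2^j \<le> 0" by (simp add: mesh_def divide_le_0_iff)
    then show False using m False by linarith
  qed
  define M :: int where "M = 2^j"
  have sh: "t (i + M) / 2^j = t i / 2^j + hr" if "i \<ge> 0" for i
    using that t_nonneg[of i] t_nonneg[of "i+M"] by (simp add: M_def field_simps)
  have m': "t (m + M) / 2^j \<le> x + hr" "x + hr < t (m + M + 1) / 2^j"
    using m sh[of m] sh[of "m+1"] m0 by (simp_all add: add_ac)
  have "L j (V (k+1) j) (x + hr) = V (k+1) j (m+M) + (V (k+1) j (m+M+1) - V (k+1) j (m+M)) *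
        (x + hr - t (m+M) / 2^j) / (t (m+M+1) / 2^j - t (m+M) / 2^j)"
    by (rule L_at[OF m'])
  also have "\<dots> = V k j m + (V k j (m+1) - V k j m) * (x - t m / 2^j) / (t (m+1) / 2^j - t m / 2^j)"
    using sh[of m] sh[of "m+1"] m0 V_right[OF k, of j] by (simp add: M_def add_ac)
  also have "\<dots> = L j (V k j) x" by (rule L_at[OF m, symmetric])
  finally show ?thesis unfolding level_eq .
qed

lemma lev_left:
  assumes k: "k \<le> - 2*int n"
  shows "DD_level hl hr n j (unit_seq (k-1)) (x - hl) = DD_level hl hr n j (unit_seq k) x"
proof (cases "x \<ge> 0")
  case True
  have "t (k - 1 + 2*int n - 1) \<le> t (-1)" using k by (subst t_le_iff) simp
  then have a: "x - hl \<ge> t (k - 1 + 2*int n - 1)" using True t_nonpos[of "-1"] by simp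
  have "t (k + 2*int n - 1) \<le> 0" using k t_le_iff[of "k + 2*int n - 1" 0] by (simp add: mesh_def)
  then have b: "x \<ge> t (k + 2*int n - 1)" using True by simp
  show ?thesis using lev_zero a b by simp
next
  case False
  obtain m where m: "t m / 2^j \<le> x" "x < t (m+1) / 2^j" using cell_exists by blast
  have m0: "m + 1 \<le> 0"
  proof (rule ccontr)
    assume "\<not> m + 1 \<le> 0" then have "t 0 \<le> t m" using t_le_iff by simp
    then have "0 \<le> t m / 2^j" by (simp add: mesh_def)
    then show False using m False by linarith
  qed
  define M :: int where "M = 2^j"
  have sh: "t (i - M) / 2^j = t i / 2^j - hl" if "i \<le> 0" for i
  proof -
    have "(0::int) \<le> 2^j" by simp
    then have "i - M \<le> 0" using that unfolding M_def by linarith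
    then show ?thesis using that t_nonpos[of i] t_nonpos[of "i-M"] by (simp add: M_def field_simps)
  qed
  have m': "t (m - M) / 2^j \<le> x - hl" "x - hl < t (m - M + 1) / 2^j"
    using m sh[of m] sh[of "m+1"] m0 by (simp_all add: algebra_simps)
  have "L j (V (k-1) j) (x - hl) = V (k-1) j (m-M) + (V (k-1) j (m-M+1) - V (k-1) j (m-M)) *
        (x - hl - t (m-M) / 2^j) / (t (m-M+1) / 2^j - t (m-M) / 2^j)"
    by (rule L_at[OF m'])
  also have "\<dots> = V k j m + (V k j (m+1) - V k j m) * (x - t m / 2^j) / (t (m+1) / 2^j - t m / 2^j)"
  proof -
    have e1: "t (m - M + 1) = t (m + 1 - M)" by (simp add: algebra_simps)
    have e2: "V (k-1) j (m-M+1) = V k j (m+1)" "V (k-1) j (m-M) = V k j m"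
      using V_left[OF k, of j] by (simp_all add: M_def algebra_simps)
    show ?thesis unfolding e1 e2 using sh[of m] sh[of "m+1"] m0 by simp
  qed
  also have "\<dots> = L j (V k j) x" by (rule L_at[OF m, symmetric])
  finally show ?thesis unfolding level_eq .
qed

end

lemma cs_integrable:
  fixes f :: "real \<Rightarrow> real"
  assumes "continuous_on UNIV f" "\<And>x. x \<notin> {a..b} \<Longrightarrow> f x = 0"
  shows "f integrable_on UNIV"
  by (rule integrable_on_superset[OF integrable_continuous_interval])
     (use assms in \<open>auto intro: continuous_on_subset\<close>)

lemma cs_integral:
  fixes f :: "real \<Rightarrow> real"
  assumes "\<And>x. x \<notin> {a..b} \<Longrightarrow> f x = 0"
  shows "integral UNIV f = integral {a..b} f"
proof -
  have "(\<lambda>x. if x \<in> {a..b} then f x else 0) = f" using assms by auto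
  then show ?thesis using integral_restrict_UNIV[of "{a..b}" f] by simp
qed

lemma cs_translate:
  fixes f :: "real \<Rightarrow> real"
  assumes z: "\<And>x. x \<notin> {a..b} \<Longrightarrow> f x = 0"
  shows "integral UNIV (\<lambda>x. f (x - s)) = integral UNIV f"
proof -
  have "integral UNIV (\<lambda>x. f (x - s)) = integral {a+s..b+s} (\<lambda>x. f (x - s))"
    by (rule cs_integral) (use z in auto)
  also have "\<dots> = integral {a+s..b+s} (f \<circ> (+) (-s))" by (simp add: o_def)
  also have "\<dots> = integral {a..b} f" by (subst integral_shift_Icc_real) simp
  also have "\<dots> = integral UNIV f" by (rule cs_integral[symmetric]) (use z in auto)
  finally show ?thesis .
qed

lemma finite_delta:
  assumes "finite A" "\<And>a. a \<in> A \<Longrightarrow> \<exists>d>0. \<forall>x y. \<bar>x - y\<bar> < d \<longrightarrow> Q a x y"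
  shows "\<exists>d>0. \<forall>a\<in>A. \<forall>x y. \<bar>x - y\<bar> < (d::real) \<longrightarrow> Q a x y"
  using assms
proof (induction A rule: finite_induct)
  case empty then show ?case by (intro exI[of _ 1]) auto
next
  case (insert a A)
  obtain d1 where d1: "d1 > 0" "\<forall>x y. \<bar>x - y\<bar> < d1 \<longrightarrow> Q a x y" using insert by blast
  obtain d2 where d2: "d2 > 0" "\<forall>a\<in>A. \<forall>x y. \<bar>x - y\<bar> < d2 \<longrightarrow> Q a x y" using insert by blast
  show ?case using d1 d2 by (intro exI[of _ "min d1 d2"]) auto
qed

locale dd2 = dd +
  fixes \<phi> :: "int \<Rightarrow> real \<Rightarrow> real"
  assumes limit: "\<And>k. continuous_on UNIV (\<phi> k) \<and>
                 uniform_limit UNIV (\<lambda>j. DD_level hl hr n j (unit_seq k)) (\<phi> k) sequentially"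
    and pos_int: "\<And>k. integral UNIV (\<phi> k) > 0"
begin

lemma phi_lim: "(\<lambda>j. DD_level hl hr n j (unit_seq k) x) \<longlonglongrightarrow> \<phi> k x"
  using limit[of k] by (intro tendsto_uniform_limitI) auto

lemma phi_cont: "continuous_on UNIV (\<phi> k)" using limit by blast

lemma phi_zero:
  assumes "x \<le> t (k - 2*int n + 1) \<or> x \<ge> t (k + 2*int n - 1)"
  shows "\<phi> k x = 0"
proof -
  have "(\<lambda>j. DD_level hl hr n j (unit_seq k) x) = (\<lambda>j. 0)" using lev_zero[OF assms] by simp
  then have "(\<lambda>j. DD_level hl hr n j (unit_seq k) x) \<longlonglongrightarrow> 0" by simp
  from LIMSEQ_unique[OF phi_lim[of k x] this] show ?thesis .
qed

lemma phi_node: "\<phi> k (t m) = unit_seq k m"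
proof -
  have "(\<lambda>j. DD_level hl hr n j (unit_seq k) (t m)) = (\<lambda>j. unit_seq k m)" using lev_node by simp
  then have "(\<lambda>j. DD_level hl hr n j (unit_seq k) (t m)) \<longlonglongrightarrow> unit_seq k m" by simp
  from LIMSEQ_unique[OF phi_lim[of k "t m"] this] show ?thesis .
qed

lemma phi_right: assumes "k \<ge> 2*int n - 1" shows "\<phi> (k+1) (x + hr) = \<phi> k x"
proof -
  have "(\<lambda>j. DD_level hl hr n j (unit_seq (k+1)) (x+hr)) = (\<lambda>j. DD_level hl hr n j (unit_seq k) x)"
    using lev_right[OF assms] by simp
  then have "(\<lambda>j. DD_level hl hr n j (unit_seq (k+1)) (x+hr)) \<longlonglongrightarrow> \<phi> k x" using phi_lim[of k x] by simp
  from LIMSEQ_unique[OF phi_lim[of "k+1" "x+hr"] this] show ?thesis .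
qed

lemma phi_left: assumes "k \<le> - 2*int n" shows "\<phi> (k-1) (x - hl) = \<phi> k x"
proof -
  have "(\<lambda>j. DD_level hl hr n j (unit_seq (k-1)) (x-hl)) = (\<lambda>j. DD_level hl hr n j (unit_seq k) x)"
    using lev_left[OF assms] by simp
  then have "(\<lambda>j. DD_level hl hr n j (unit_seq (k-1)) (x-hl)) \<longlonglongrightarrow> \<phi> k x" using phi_lim[of k x] by simp
  from LIMSEQ_unique[OF phi_lim[of "k-1" "x-hl"] this] show ?thesis .
qed

lemma phi_R: "k \<ge> 2*int n - 1 \<Longrightarrow> \<phi> k x = \<phi> (2*int n - 1) (x - of_int (k - (2*int n - 1)) * hr)"
proof (induction k arbitrary: x rule: int_ge_induct)
  case base then show ?case by simp
next
  case (step k)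
  have "\<phi> (k+1) x = \<phi> (k+1) ((x - hr) + hr)" by simp
  also have "\<dots> = \<phi> k (x - hr)" by (rule phi_right[OF step(1)])
  also have "\<dots> = \<phi> (2*int n - 1) (x - hr - of_int (k - (2*int n - 1)) * hr)" by (rule step(2))
  also have "x - hr - of_int (k - (2*int n - 1)) * hr = x - of_int (k + 1 - (2*int n - 1)) * hr"
    by (simp add: algebra_simps)
  finally show ?case .
qed

lemma phi_Lft: "k \<le> - 2*int n \<Longrightarrow> \<phi> k x = \<phi> (- 2*int n) (x - of_int (k + 2*int n) * hl)"
proof (induction k arbitrary: x rule: int_le_induct)
  case base then show ?case by simp
next
  case (step k)
  have "\<phi> (k-1) x = \<phi> (k-1) ((x + hl) - hl)" by simp
  also have "\<dots> = \<phi> k (x + hl)" by (rule phi_left[OF step(1)])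
  also have "\<dots> = \<phi> (- 2*int n) (x + hl - of_int (k + 2*int n) * hl)" by (rule step(2))
  also have "x + hl - of_int (k + 2*int n) * hl = x - of_int (k - 1 + 2*int n) * hl"
    by (simp add: algebra_simps)
  finally show ?case .
qed

abbreviation I0 where "I0 \<equiv> {- 2*int n .. 2*int n - 1}"

lemma phi_transl: "\<exists>k0\<in>I0. \<exists>s. \<forall>x. \<phi> k x = \<phi> k0 (x - s)"
proof -
  consider "k \<ge> 2*int n - 1" | "k \<le> - 2*int n" | "k \<in> I0"
    by (cases "k \<ge> 2*int n - 1"; cases "k \<le> - 2*int n") auto
  then show ?thesis
  proof cases
    case 1
    have "\<forall>x. \<phi> k x = \<phi> (2*int n - 1) (x - of_int (k - (2*int n - 1)) * hr)" using phi_R[OF 1] by blast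
    moreover have "2*int n - 1 \<in> I0" using n1 by simp
    ultimately show ?thesis by blast
  next
    case 2
    have "\<forall>x. \<phi> k x = \<phi> (- 2*int n) (x - of_int (k + 2*int n) * hl)" using phi_Lft[OF 2] by blast
    moreover have "- 2*int n \<in> I0" using n1 by simp
    ultimately show ?thesis by blast
  next
    case 3 then show ?thesis by (intro bexI[of _ k] exI[of _ 0]) auto
  qed
qed

definition a0 where "a0 = t (- 4 * int n)"
definition b0 where "b0 = t (4 * int n)"

lemma I0_supp: "k0 \<in> I0 \<Longrightarrow> x \<notin> {a0..b0} \<Longrightarrow> \<phi> k0 x = 0"
proof (rule phi_zero)
  assume k0: "k0 \<in> I0" and x: "x \<notin> {a0..b0}"
  have "t (- 4 * int n) \<le> t (k0 - 2*int n + 1)" "t (k0 + 2*int n - 1) \<le> t (4 * int n)"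
    using k0 by (simp_all add: t_le_iff)
  then show "x \<le> t (k0 - 2*int n + 1) \<or> x \<ge> t (k0 + 2*int n - 1)"
    using x unfolding a0_def b0_def by auto
qed

definition Ii where "Ii k = integral UNIV (\<phi> k)"

lemma phi_transl': "\<exists>k0\<in>I0. \<exists>s. \<forall>x. \<phi> k x = \<phi> k0 (x - s) \<and> Ii k = Ii k0"
proof -
  obtain k0 s where k0: "k0 \<in> I0" "\<And>x. \<phi> k x = \<phi> k0 (x - s)" using phi_transl by blast
  have "\<phi> k = (\<lambda>x. \<phi> k0 (x - s))" using k0(2) by (rule ext)
  then have "Ii k = integral UNIV (\<lambda>x. \<phi> k0 (x - s))" unfolding Ii_def by simp
  also have "\<dots> = Ii k0" unfolding Ii_def by (rule cs_translate[where a = a0 and b = b0]) (use I0_supp k0 in auto)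
  finally show ?thesis using k0 by blast
qed

abbreviation \<Psi> where "\<Psi> \<equiv> scaling_fun \<phi>"

lemma Phi_eq: "\<Psi> k x = \<phi> k x / sqrt (Ii k)" unfolding scaling_fun_def Ii_def ..

lemma Phi_transl: "\<exists>k0\<in>I0. \<exists>s. \<forall>x. \<Psi> k x = \<Psi> k0 (x - s)"
proof -
  obtain k0 s where k0: "k0 \<in> I0" "\<And>x. \<phi> k x = \<phi> k0 (x - s)" "Ii k = Ii k0"
    using phi_transl'[of k] by blast
  show ?thesis unfolding Phi_eq using k0 by (intro bexI[of _ k0] exI[of _ s]) auto
qed

lemma Phi_zero: "x \<le> t (k - 2*int n + 1) \<or> x \<ge> t (k + 2*int n - 1) \<Longrightarrow> \<Psi> k x = 0"
  unfolding Phi_eq using phi_zero by simp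

lemma Phi_nz: "\<Psi> k x \<noteq> 0 \<Longrightarrow> t (k - 2*int n + 1) < x \<and> x < t (k + 2*int n - 1)"
proof (rule ccontr)
  assume a: "\<Psi> k x \<noteq> 0" "\<not> (t (k - 2*int n + 1) < x \<and> x < t (k + 2*int n - 1))"
  then have "x \<le> t (k - 2*int n + 1) \<or> x \<ge> t (k + 2*int n - 1)" by linarith
  then show False using Phi_zero a(1) by blast
qed

lemma Phi_node: "\<Psi> k (t m) = unit_seq k m / sqrt (Ii k)"
  unfolding Phi_eq phi_node ..

lemma Ii_pos: "Ii k > 0" unfolding Ii_def by (rule pos_int)

lemma Phi_cont: "continuous_on UNIV (\<Psi> k)"
  unfolding Phi_eq by (intro continuous_intros phi_cont) (use Ii_pos[of k] in auto)


lemma Ii_bounds: "\<exists>Imin Imax. 0 < Imin \<and> (\<forall>k. Imin \<le> Ii k \<and> Ii k \<le> Imax)"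
proof -
  have fin: "finite (Ii ` I0)" "Ii ` I0 \<noteq> {}" using n1 by auto
  define Imin where "Imin = Min (Ii ` I0)"
  define Imax where "Imax = Max (Ii ` I0)"
  have "Imin > 0" unfolding Imin_def using fin Ii_pos by (subst Min_gr_iff) auto
  moreover have "Imin \<le> Ii k \<and> Ii k \<le> Imax" for k
  proof -
    obtain k0 where k0: "k0 \<in> I0" "Ii k = Ii k0" using phi_transl'[of k] by blast
    show ?thesis unfolding Imin_def Imax_def k0 using fin k0 by auto
  qed
  ultimately show ?thesis by blast
qed

lemma Phi_bounded: "\<exists>M. \<forall>k x. \<bar>\<Psi> k x\<bar> \<le> M"
proof -
  have "bounded (\<Union>k0\<in>I0. \<Psi> k0 ` {a0..b0})"
    by (rule bounded_UN) (auto intro!: compact_imp_bounded compact_continuous_image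
        continuous_on_subset[OF Phi_cont])
  then obtain M where M0: "\<forall>y \<in> (\<Union>k0\<in>I0. \<Psi> k0 ` {a0..b0}). norm y \<le> M"
    unfolding bounded_iff by blast
  have M: "\<bar>y\<bar> \<le> M" if "y \<in> (\<Union>k0\<in>I0. \<Psi> k0 ` {a0..b0})" for y
  proof -
    have "norm y \<le> M" using M0 that by blast
    then show ?thesis by simp
  qed
  have "a0 \<le> b0" unfolding a0_def b0_def by (simp add: t_le_iff)
  then have "\<Psi> 0 a0 \<in> (\<Union>k0\<in>I0. \<Psi> k0 ` {a0..b0})" using n1 by (intro UN_I[of 0]) auto
  then have "\<bar>\<Psi> 0 a0\<bar> \<le> M" by (rule M)
  then have M0: "M \<ge> 0" by linarith
  have "\<bar>\<Psi> k x\<bar> \<le> M" for k x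
  proof -
    obtain k0 s where k0: "k0 \<in> I0" "\<And>x. \<Psi> k x = \<Psi> k0 (x - s)" using Phi_transl by blast
    show ?thesis
    proof (cases "x - s \<in> {a0..b0}")
      case True
      then have "\<Psi> k0 (x - s) \<in> (\<Union>k0\<in>I0. \<Psi> k0 ` {a0..b0})" using k0(1) by blast
      then show ?thesis using M k0(2) by simp
    next
      case False then show ?thesis using k0 I0_supp[of k0 "x-s"] M0 by (simp add: Phi_eq)
    qed
  qed
  then show ?thesis by blast
qed

lemma Phi_equicont: "e > 0 \<Longrightarrow> \<exists>d>0. \<forall>k x y. \<bar>x - y\<bar> < d \<longrightarrow> \<bar>\<Psi> k x - \<Psi> k y\<bar> < e"
proof -
  assume e: "e > 0"
  have "\<exists>d>0. \<forall>x y. \<bar>x - y\<bar> < d \<longrightarrow> \<bar>\<Psi> k0 x - \<Psi> k0 y\<bar> < e" if k0: "k0 \<in> I0" for k0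
  proof -
    have "uniformly_continuous_on {a0-1..b0+1} (\<Psi> k0)"
      by (rule compact_uniformly_continuous) (auto intro: continuous_on_subset[OF Phi_cont])
    then obtain d where d: "d > 0" "\<forall>x\<in>{a0-1..b0+1}. \<forall>y\<in>{a0-1..b0+1}.
        dist y x < d \<longrightarrow> dist (\<Psi> k0 y) (\<Psi> k0 x) < e"
      unfolding uniformly_continuous_on_def using e by blast
    have z: "\<Psi> k0 x = 0" if "x \<notin> {a0..b0}" for x using I0_supp[OF k0 that] by (simp add: Phi_eq)
    have "\<bar>\<Psi> k0 x - \<Psi> k0 y\<bar> < e" if xy: "\<bar>x - y\<bar> < min d 1" for x y
    proof (cases "x \<in> {a0-1..b0+1} \<and> y \<in> {a0-1..b0+1}")
      case True then show ?thesis using d(2) xy by (auto simp: dist_real_def)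
    next
      case False
      then have "x \<notin> {a0..b0} \<and> y \<notin> {a0..b0}" using xy by auto
      then show ?thesis using z e by simp
    qed
    then show ?thesis using d by (intro exI[of _ "min d 1"]) auto
  qed
  then obtain d where d: "d > 0" "\<forall>k0\<in>I0. \<forall>x y. \<bar>x - y\<bar> < d \<longrightarrow> \<bar>\<Psi> k0 x - \<Psi> k0 y\<bar> < e"
    using finite_delta[of I0 "\<lambda>k0 x y. \<bar>\<Psi> k0 x - \<Psi> k0 y\<bar> < e"] by auto
  have "\<bar>\<Psi> k x - \<Psi> k y\<bar> < e" if "\<bar>x - y\<bar> < d" for k x y
  proof -
    obtain k0 s where k0: "k0 \<in> I0" "\<And>x. \<Psi> k x = \<Psi> k0 (x - s)" using Phi_transl by blast
    show ?thesis using d(2) k0 that by simp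
  qed
  then show ?thesis using d by blast
qed

end

context dd2 begin

definition W :: "int \<Rightarrow> int set" where "W m = {m - 2*int n + 1 .. m + 2*int n - 1}"

lemma fin_W: "finite (W m)" unfolding W_def by simp
lemma card_W: "real (card (W m)) = 4 * real n - 1"
proof -
  have "card (W m) = nat (4 * int n - 1)" unfolding W_def by simp
  then show ?thesis using n1 by simp
qed

definition d0 where "d0 = min hl hr"
lemma d0_pos: "d0 > 0" unfolding d0_def using hl hr by simp

lemma t_gap: "t (m+1) - t m \<ge> d0"
proof (cases "m \<ge> 0")
  case True then show ?thesis using t_nonneg[of m] t_nonneg[of "m+1"] by (simp add: d0_def algebra_simps)
next
  case False then show ?thesis using t_nonpos[of m] t_nonpos[of "m+1"] by (simp add: d0_def algebra_simps)
qed

lemma t_gap2: "m1 < m2 \<Longrightarrow> t m2 - t m1 \<ge> d0"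
  using t_gap[of m1] t_le_iff[of "m1+1" m2] by linarith

lemma active:
  assumes "t (m-1) < x" "x < t (m+1)" "\<Psi> k x \<noteq> 0"
  shows "k \<in> W m"
proof -
  have a: "t (k - 2*int n + 1) < x" "x < t (k + 2*int n - 1)" using Phi_nz[OF assms(3)] by auto
  have "t (k - 2*int n + 1) < t (m+1)" using a assms by linarith
  then have "k - 2*int n + 1 < m + 1" using t_less_iff by blast
  moreover have "t (m-1) < t (k + 2*int n - 1)" using a assms by linarith
  then have "m - 1 < k + 2*int n - 1" using t_less_iff by blast
  ultimately show ?thesis unfolding W_def by auto
qed

lemma near_node: "\<bar>x - t m\<bar> < d0 \<Longrightarrow> t (m-1) < x \<and> x < t (m+1)"
  using t_gap[of m] t_gap[of "m-1"] by auto

lemma x_cell: "\<exists>m. t (m-1) < x \<and> x < t (m+1)"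
proof -
  obtain m where "t m / 2^0 \<le> x" "x < t (m+1) / 2^0" using cell_exists[of 0 x] by blast
  moreover have "t (m-1) < t m" by (simp add: t_less_iff)
  ultimately show ?thesis by (intro exI[of _ m]) auto
qed

lemma box_cell:
  assumes "x \<in> {t (- int N) .. t (int N)}"
  shows "\<exists>m \<in> {- int N .. int N}. t (m-1) < x \<and> x < t (m+1)"
proof -
  obtain m where m: "t m / 2^0 \<le> x" "x < t (m+1) / 2^0" using cell_exists[of 0 x] by blast
  then have m': "t m \<le> x" "x < t (m+1)" by auto
  show ?thesis
  proof (cases "m + 1 \<le> int N")
    case True
    have "t (- int N) < t (m+1)" using assms m' by auto
    then have "- int N < m + 1" using t_less_iff by blast
    moreover have "t (m-1) < t m" by (simp add: t_less_iff)
    ultimately show ?thesis using True m' by (intro bexI[of _ m]) auto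
  next
    case False
    have "t m \<le> t (int N)" using assms m' by auto
    then have "m \<le> int N" using t_le_iff by blast
    then have mN: "m = int N" using False by simp
    have "x = t (int N)" using assms m' mN by auto
    moreover have "t (int N - 1) < t (int N)" "t (int N) < t (int N + 1)" by (simp_all add: t_less_iff)
    ultimately show ?thesis by (intro bexI[of _ "int N"]) auto
  qed
qed

definition G :: "(int \<Rightarrow> real) \<Rightarrow> int set \<Rightarrow> real \<Rightarrow> real" where
  "G f K x = (\<Sum>k\<in>K. f k * \<Psi> k x)"

lemma g_loc:
  assumes "t (m-1) < x" "x < t (m+1)" "finite K" "W m \<subseteq> K"
  shows "(\<Sum>\<^sub>\<infinity>k. f k * \<Psi> k x) = G f K x"
proof -
  have "(\<Sum>\<^sub>\<infinity>k. f k * \<Psi> k x) = infsum (\<lambda>k. f k * \<Psi> k x) K"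
  proof (rule infsum_cong_neutral)
    fix k assume "k \<in> UNIV - K"
    then have "k \<notin> W m" using assms by auto
    then have "\<Psi> k x = 0" using active[OF assms(1,2)] by blast
    then show "f k * \<Psi> k x = 0" by simp
  qed auto
  also have "\<dots> = G f K x" unfolding G_def using assms(3) by simp
  finally show ?thesis .
qed

lemma G_cont: "continuous_on UNIV (G f K)"
  unfolding G_def by (intro continuous_on_sum continuous_on_mult continuous_on_const Phi_cont)

abbreviation KN :: "nat \<Rightarrow> int set" where "KN N \<equiv> {- int N .. int N}"

lemma G_supp: "x \<notin> {t (- int N - 2*int n) .. t (int N + 2*int n)} \<Longrightarrow> G f (KN N) x = 0"
proof -
  assume x: "x \<notin> {t (- int N - 2*int n) .. t (int N + 2*int n)}"
  have "\<Psi> k x = 0" if k: "k \<in> KN N" for k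
  proof (rule Phi_zero)
    have "t (- int N - 2*int n) \<le> t (k - 2*int n + 1)" "t (k + 2*int n - 1) \<le> t (int N + 2*int n)"
      using k by (simp_all add: t_le_iff)
    then show "x \<le> t (k - 2*int n + 1) \<or> t (k + 2*int n - 1) \<le> x" using x by auto
  qed
  then show ?thesis unfolding G_def by simp
qed

lemma G_sq_int: "(\<lambda>x. (G f (KN N) x)\<^sup>2) integrable_on UNIV"
  by (rule cs_integrable[where a = "t (- int N - 2*int n)" and b = "t (int N + 2*int n)"])
     (use G_supp in \<open>auto intro!: continuous_intros G_cont[THEN continuous_on_subset]\<close>)

lemma Phi_sq_int: "(\<lambda>x. (\<Psi> k x)\<^sup>2) integrable_on UNIV"
proof (rule cs_integrable[where a = "t (k - 2*int n + 1)" and b = "t (k + 2*int n - 1)"])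
  show "continuous_on UNIV (\<lambda>x. (\<Psi> k x)\<^sup>2)" by (intro continuous_intros Phi_cont)
  fix x assume "x \<notin> {t (k - 2*int n + 1) .. t (k + 2*int n - 1)}"
  then have "\<Psi> k x = 0" by (intro Phi_zero) auto
  then show "(\<Psi> k x)\<^sup>2 = 0" by simp
qed

lemma Phi_sq_bound: "\<exists>Q\<ge>0. \<forall>k. integral UNIV (\<lambda>x. (\<Psi> k x)\<^sup>2) \<le> Q"
proof -
  define Q where "Q = (\<Sum>k0\<in>I0. integral UNIV (\<lambda>x. (\<Psi> k0 x)\<^sup>2))"
  have nn: "integral UNIV (\<lambda>x. (\<Psi> k x)\<^sup>2) \<ge> 0" for k
    by (rule integral_nonneg[OF Phi_sq_int]) simp
  have "integral UNIV (\<lambda>x. (\<Psi> k x)\<^sup>2) \<le> Q" for k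
  proof -
    obtain k0 s where k0: "k0 \<in> I0" "\<And>x. \<Psi> k x = \<Psi> k0 (x - s)" using Phi_transl by blast
    have z: "(\<Psi> k0 x)\<^sup>2 = 0" if "x \<notin> {a0..b0}" for x using I0_supp[OF k0(1) that] by (simp add: Phi_eq)
    have "integral UNIV (\<lambda>x. (\<Psi> k x)\<^sup>2) = integral UNIV (\<lambda>x. (\<Psi> k0 (x - s))\<^sup>2)" using k0 by simp
    also have "\<dots> = integral UNIV (\<lambda>x. (\<Psi> k0 x)\<^sup>2)"
      by (rule cs_translate[where f = "\<lambda>x. (\<Psi> k0 x)\<^sup>2" and a = a0 and b = b0]) (use z in auto)
    also have "\<dots> \<le> Q" unfolding Q_def using k0(1) nn by (intro member_le_sum) auto
    finally show ?thesis .
  qed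
  moreover have "Q \<ge> 0" unfolding Q_def using nn by (intro sum_nonneg) auto
  ultimately show ?thesis by blast
qed

lemma G_pointwise:
  assumes "finite K"
  shows "(G f K x)\<^sup>2 \<le> (4 * real n - 1) * (\<Sum>k\<in>K. (f k)\<^sup>2 * (\<Psi> k x)\<^sup>2)"
proof -
  obtain m where m: "t (m-1) < x" "x < t (m+1)" using x_cell by blast
  have "G f K x = (\<Sum>k\<in>K \<inter> W m. f k * \<Psi> k x)"
    unfolding G_def by (rule sum.mono_neutral_right) (use assms active[OF m] in auto)
  then have "(G f K x)\<^sup>2 \<le> (\<Sum>k\<in>K \<inter> W m. (f k * \<Psi> k x)\<^sup>2) * real (card (K \<inter> W m))"
    using sum_squared_le_sum_of_squares by simp
  also have "\<dots> \<le> (\<Sum>k\<in>K. (f k * \<Psi> k x)\<^sup>2) * (4 * real n - 1)"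
  proof (rule mult_mono)
    show "(\<Sum>k\<in>K \<inter> W m. (f k * \<Psi> k x)\<^sup>2) \<le> (\<Sum>k\<in>K. (f k * \<Psi> k x)\<^sup>2)"
      by (rule sum_mono2) (use assms in auto)
    have "card (K \<inter> W m) \<le> card (W m)" by (rule card_mono[OF fin_W]) auto
    then show "real (card (K \<inter> W m)) \<le> 4 * real n - 1" using card_W[of m] by linarith
  qed (auto intro: sum_nonneg)
  finally show ?thesis by (simp add: power_mult_distrib mult_ac)
qed

lemma G_upper:
  assumes sf: "(\<lambda>k. (f k)\<^sup>2) summable_on UNIV" and Q: "Q \<ge> 0" "\<And>k. integral UNIV (\<lambda>x. (\<Psi> k x)\<^sup>2) \<le> Q"
  shows "integral UNIV (\<lambda>x. (G f (KN N) x)\<^sup>2) \<le> (4 * real n - 1) * Q * (\<Sum>\<^sub>\<infinity>k. (f k)\<^sup>2)"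
proof -
  have int2: "(\<lambda>x. (f k)\<^sup>2 * (\<Psi> k x)\<^sup>2) integrable_on UNIV" for k
    using integrable_on_cmult_left[OF Phi_sq_int, of "(f k)\<^sup>2"] by simp
  have "integral UNIV (\<lambda>x. (G f (KN N) x)\<^sup>2) \<le>
        integral UNIV (\<lambda>x. (4 * real n - 1) * (\<Sum>k\<in>KN N. (f k)\<^sup>2 * (\<Psi> k x)\<^sup>2))"
  proof (rule integral_le[OF G_sq_int])
    show "(\<lambda>x. (4 * real n - 1) * (\<Sum>k\<in>KN N. (f k)\<^sup>2 * (\<Psi> k x)\<^sup>2)) integrable_on UNIV"
    proof -
      have "(\<lambda>x. \<Sum>k\<in>KN N. (f k)\<^sup>2 * (\<Psi> k x)\<^sup>2) integrable_on UNIV"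
        by (rule integrable_sum) (auto intro: int2)
      then show ?thesis using integrable_on_cmult_left[of _ UNIV "4 * real n - 1"] by simp
    qed
    show "(G f (KN N) x)\<^sup>2 \<le> (4 * real n - 1) * (\<Sum>k\<in>KN N. (f k)\<^sup>2 * (\<Psi> k x)\<^sup>2)" for x
      by (rule G_pointwise) simp
  qed
  also have "\<dots> = (4 * real n - 1) * (\<Sum>k\<in>KN N. (f k)\<^sup>2 * integral UNIV (\<lambda>x. (\<Psi> k x)\<^sup>2))"
    by (simp add: integral_mult_right integral_sum int2 Phi_sq_int)
  also have "\<dots> \<le> (4 * real n - 1) * (\<Sum>k\<in>KN N. (f k)\<^sup>2 * Q)"
  proof (rule mult_left_mono)
    show "(\<Sum>k\<in>KN N. (f k)\<^sup>2 * integral UNIV (\<lambda>x. (\<Psi> k x)\<^sup>2)) \<le> (\<Sum>k\<in>KN N. (f k)\<^sup>2 * Q)"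
      by (rule sum_mono, rule mult_left_mono) (use Q in auto)
  qed (use n1 in auto)
  also have "\<dots> = (4 * real n - 1) * Q * (\<Sum>k\<in>KN N. (f k)\<^sup>2)"
    by (simp add: sum_distrib_left sum_distrib_right mult_ac)
  also have "\<dots> \<le> (4 * real n - 1) * Q * (\<Sum>\<^sub>\<infinity>k. (f k)\<^sup>2)"
  proof (rule mult_left_mono)
    show "(\<Sum>k\<in>KN N. (f k)\<^sup>2) \<le> (\<Sum>\<^sub>\<infinity>k. (f k)\<^sup>2)"
      by (rule finite_sum_le_infsum[OF sf]) auto
  qed (use n1 Q in auto)
  finally show ?thesis .
qed

end

context dd2 begin

definition gf :: "(int \<Rightarrow> real) \<Rightarrow> real \<Rightarrow> real" where "gf f x = (\<Sum>\<^sub>\<infinity>k. f k * \<Psi> k x)"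

abbreviation Box :: "nat \<Rightarrow> real set" where "Box N \<equiv> {t (- int N) .. t (int N)}"

lemma g_box: "x \<in> Box N \<Longrightarrow> gf f x = G f (KN (N + 2*n)) x"
proof -
  assume x: "x \<in> Box N"
  obtain m where m: "m \<in> KN N" "t (m-1) < x" "x < t (m+1)" using box_cell[OF x] by blast
  have "W m \<subseteq> KN (N + 2*n)" using m(1) unfolding W_def by auto
  then show ?thesis unfolding gf_def by (intro g_loc[OF m(2,3)]) auto
qed

lemma in_some_box: "\<exists>N. x \<in> Box N"
proof -
  obtain N where N: "\<bar>x\<bar> < real N * d0" using ex_less_of_nat_mult[OF d0_pos] by blast
  have "real N * d0 \<le> real N * hr" "real N * d0 \<le> real N * hl"
    by (intro mult_left_mono; simp add: d0_def)+
  then have "t (- int N) \<le> x" "x \<le> t (int N)" using N t_nonpos[of "- int N"] t_nonneg[of "int N"] by auto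
  then show ?thesis by auto
qed

lemma g_sq_upper:
  assumes sf: "(\<lambda>k. (f k)\<^sup>2) summable_on UNIV" and Q: "Q \<ge> 0" "\<And>k. integral UNIV (\<lambda>x. (\<Psi> k x)\<^sup>2) \<le> Q"
  shows "(\<lambda>x. (gf f x)\<^sup>2) integrable_on UNIV \<and>
         integral UNIV (\<lambda>x. (gf f x)\<^sup>2) \<le> (4 * real n - 1) * Q * (\<Sum>\<^sub>\<infinity>k. (f k)\<^sup>2)"
proof -
  define C where "C = (4 * real n - 1) * Q * (\<Sum>\<^sub>\<infinity>k. (f k)\<^sup>2)"
  define h where "h N x = (if x \<in> Box N then (gf f x)\<^sup>2 else 0)" for N x
  have h_eq: "h N = (\<lambda>x. if x \<in> Box N then (G f (KN (N + 2*n)) x)\<^sup>2 else 0)" for N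
    unfolding h_def using g_box by auto
  have h_int: "h N integrable_on UNIV" for N
  proof -
    have "(\<lambda>x. (G f (KN (N + 2*n)) x)\<^sup>2) integrable_on Box N"
      by (rule integrable_continuous_interval) (intro continuous_intros G_cont[THEN continuous_on_subset]; simp)
    then show ?thesis unfolding h_eq by (rule iffD2[OF integrable_restrict_UNIV])
  qed
  have h_mono: "h N x \<le> h (Suc N) x" for N x
  proof -
    have "Box N \<subseteq> Box (Suc N)" by (auto simp: t_le_iff intro: order_trans)
    then show ?thesis unfolding h_def by auto
  qed
  have h_lim: "(\<lambda>N. h N x) \<longlonglongrightarrow> (gf f x)\<^sup>2" for x
  proof (rule tendsto_eventually)
    obtain N0 where N0: "x \<in> Box N0" using in_some_box by blast
    have "x \<in> Box N" if "N \<ge> N0" for N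
    proof -
      have "t (- int N) \<le> t (- int N0)" "t (int N0) \<le> t (int N)" using that by (simp_all add: t_le_iff)
      then show ?thesis using N0 by auto
    qed
    then show "\<forall>\<^sub>F N in sequentially. h N x = (gf f x)\<^sup>2"
      unfolding h_def by (intro eventually_sequentiallyI[of N0]) auto
  qed
  have h_bound: "integral UNIV (h N) \<le> C" for N
  proof -
    have "integral UNIV (h N) \<le> integral UNIV (\<lambda>x. (G f (KN (N + 2*n)) x)\<^sup>2)"
      by (rule integral_le[OF h_int G_sq_int]) (simp add: h_eq)
    also have "\<dots> \<le> C" unfolding C_def by (rule G_upper[OF sf Q])
    finally show ?thesis .
  qed
  have h_nn: "integral UNIV (h N) \<ge> 0" for N
    by (rule integral_nonneg[OF h_int]) (simp add: h_def)
  have bnd: "bounded (range (\<lambda>N. integral UNIV (h N)))"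
    unfolding bounded_iff using h_bound h_nn by (intro exI[of _ C]) auto
  have mc: "(\<lambda>x. (gf f x)\<^sup>2) integrable_on UNIV \<and> (\<lambda>N. integral UNIV (h N)) \<longlonglongrightarrow> integral UNIV (\<lambda>x. (gf f x)\<^sup>2)"
    by (rule monotone_convergence_increasing[OF h_int h_mono h_lim bnd])
  then have "integral UNIV (\<lambda>x. (gf f x)\<^sup>2) \<le> C"
    using h_bound by (intro tendsto_upperbound[of "\<lambda>N. integral UNIV (h N)" _ sequentially]) auto
  then show ?thesis using mc unfolding C_def by simp
qed

lemma dbl_sum:
  assumes sf: "(\<lambda>k. (f k)\<^sup>2) summable_on UNIV" and F: "finite F"
  shows "(\<Sum>m\<in>F. \<Sum>k\<in>W m. (f k)\<^sup>2) \<le> (4 * real n - 1) * (\<Sum>\<^sub>\<infinity>k. (f k)\<^sup>2)"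
proof -
  define D where "D = {- 2*int n + 1 .. 2*int n - 1}"
  have "(\<Sum>m\<in>F. \<Sum>k\<in>W m. (f k)\<^sup>2) = (\<Sum>m\<in>F. \<Sum>d\<in>D. (f (d + m))\<^sup>2)"
  proof (rule sum.cong[OF refl])
    fix m
    show "(\<Sum>k\<in>W m. (f k)\<^sup>2) = (\<Sum>d\<in>D. (f (d + m))\<^sup>2)"
      unfolding W_def D_def by (subst sum_shift_int[where c = m]) simp
  qed
  also have "\<dots> = (\<Sum>d\<in>D. \<Sum>m\<in>F. (f (d + m))\<^sup>2)" by (rule sum.swap)
  also have "\<dots> \<le> (\<Sum>d\<in>D. (\<Sum>\<^sub>\<infinity>k. (f k)\<^sup>2))"
  proof (rule sum_mono)
    fix d
    have "(\<Sum>m\<in>F. (f (d + m))\<^sup>2) = (\<Sum>k\<in>(\<lambda>m. d + m) ` F. (f k)\<^sup>2)"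
      by (subst sum.reindex) (auto simp: inj_on_def)
    also have "\<dots> \<le> (\<Sum>\<^sub>\<infinity>k. (f k)\<^sup>2)" by (rule finite_sum_le_infsum[OF sf]) (use F in auto)
    finally show "(\<Sum>m\<in>F. (f (d + m))\<^sup>2) \<le> (\<Sum>\<^sub>\<infinity>k. (f k)\<^sup>2)" .
  qed
  also have "\<dots> = real (card D) * (\<Sum>\<^sub>\<infinity>k. (f k)\<^sup>2)" by simp
  also have "real (card D) = 4 * real n - 1"
  proof -
    have "card D = nat (4 * int n - 1)" unfolding D_def by simp
    then show ?thesis using n1 by simp
  qed
  finally show ?thesis .
qed

end

context dd2 begin

lemma sq_lower_aux: "(a + b)\<^sup>2 \<ge> a\<^sup>2 / 2 - b\<^sup>2" for a b :: real
proof -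
  have "(a + b)\<^sup>2 - (a\<^sup>2 / 2 - b\<^sup>2) = (a + 2*b)\<^sup>2 / 2" by (simp add: power2_eq_square field_simps)
  moreover have "(a + 2*b)\<^sup>2 / 2 \<ge> 0" by simp
  ultimately show ?thesis by linarith
qed

lemma pt_lower:
  assumes eps: "\<And>k x y. \<bar>x - y\<bar> < d \<Longrightarrow> \<bar>\<Psi> k x - \<Psi> k y\<bar> < e"
    and x: "\<bar>x - t m\<bar> < d" and Imax: "\<And>k. Ii k \<le> Imax"
  shows "(G f (W m) x)\<^sup>2 \<ge> (f m)\<^sup>2 / (2 * Imax) - e\<^sup>2 * (4 * real n - 1) * (\<Sum>k\<in>W m. (f k)\<^sup>2)"
proof -
  define a where "a = f m / sqrt (Ii m)"
  define b where "b = (\<Sum>k\<in>W m. f k * (\<Psi> k x - \<Psi> k (t m)))"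
  have mW: "m \<in> W m" unfolding W_def using n1 by auto
  have "(\<Sum>k\<in>W m. f k * \<Psi> k (t m)) = (\<Sum>k\<in>W m. if k = m then f m / sqrt (Ii m) else 0)"
    by (rule sum.cong) (auto simp: Phi_node unit_seq_def)
  also have "\<dots> = a" using mW fin_W unfolding a_def by simp
  finally have sa: "(\<Sum>k\<in>W m. f k * \<Psi> k (t m)) = a" .
  have Gab: "G f (W m) x = a + b"
    unfolding G_def b_def sa[symmetric] by (simp add: right_diff_distrib sum_subtractf)
  have "\<bar>b\<bar> \<le> (\<Sum>k\<in>W m. \<bar>f k * (\<Psi> k x - \<Psi> k (t m))\<bar>)" unfolding b_def by (rule sum_abs)
  also have "\<dots> \<le> (\<Sum>k\<in>W m. \<bar>f k\<bar> * e)"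
  proof (rule sum_mono)
    fix k
    have "\<bar>\<Psi> k x - \<Psi> k (t m)\<bar> \<le> e" using eps[OF x] less_imp_le by blast
    then show "\<bar>f k * (\<Psi> k x - \<Psi> k (t m))\<bar> \<le> \<bar>f k\<bar> * e"
      by (simp add: abs_mult mult_left_mono)
  qed
  also have "\<dots> = e * (\<Sum>k\<in>W m. \<bar>f k\<bar>)" by (simp add: sum_distrib_left mult_ac)
  finally have bb: "\<bar>b\<bar> \<le> e * (\<Sum>k\<in>W m. \<bar>f k\<bar>)" .
  have "b\<^sup>2 = \<bar>b\<bar>\<^sup>2" by simp
  also have "\<dots> \<le> (e * (\<Sum>k\<in>W m. \<bar>f k\<bar>))\<^sup>2" by (rule power_mono[OF bb]) simp
  also have "\<dots> = e\<^sup>2 * (\<Sum>k\<in>W m. \<bar>f k\<bar>)\<^sup>2" by (simp add: power_mult_distrib)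
  also have "\<dots> \<le> e\<^sup>2 * ((\<Sum>k\<in>W m. \<bar>f k\<bar>\<^sup>2) * real (card (W m)))"
    by (rule mult_left_mono[OF sum_squared_le_sum_of_squares]) simp
  also have "\<dots> = e\<^sup>2 * (4 * real n - 1) * (\<Sum>k\<in>W m. (f k)\<^sup>2)" by (simp add: card_W mult_ac)
  finally have b2: "b\<^sup>2 \<le> e\<^sup>2 * (4 * real n - 1) * (\<Sum>k\<in>W m. (f k)\<^sup>2)" .
  have Ip: "Ii m > 0" by (rule Ii_pos)
  have a2: "a\<^sup>2 = (f m)\<^sup>2 / Ii m" unfolding a_def using Ip by (simp add: power_divide)
  have "(f m)\<^sup>2 / Imax \<le> (f m)\<^sup>2 / Ii m"
    using Ip Imax[of m] by (intro divide_left_mono) auto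
  then have "a\<^sup>2 / 2 \<ge> (f m)\<^sup>2 / (2 * Imax)" unfolding a2 by simp
  then show ?thesis unfolding Gab using sq_lower_aux[of a b] b2 by linarith
qed

lemma ball_lower:
  assumes eps: "\<And>k x y. \<bar>x - y\<bar> < d \<Longrightarrow> \<bar>\<Psi> k x - \<Psi> k y\<bar> < e"
    and dl: "0 < dl" "dl < d" "dl < d0" and Imax: "\<And>k. Ii k \<le> Imax"
  shows "(\<lambda>x. if x \<in> {t m - dl .. t m + dl} then (gf f x)\<^sup>2 else 0) integrable_on UNIV \<and>
    integral UNIV (\<lambda>x. if x \<in> {t m - dl .. t m + dl} then (gf f x)\<^sup>2 else 0) \<ge>
    2 * dl * ((f m)\<^sup>2 / (2 * Imax) - e\<^sup>2 * (4 * real n - 1) * (\<Sum>k\<in>W m. (f k)\<^sup>2))"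
proof -
  define B where "B = {t m - dl .. t m + dl}"
  define c where "c = (f m)\<^sup>2 / (2 * Imax) - e\<^sup>2 * (4 * real n - 1) * (\<Sum>k\<in>W m. (f k)\<^sup>2)"
  have xB: "\<bar>x - t m\<bar> < d \<and> \<bar>x - t m\<bar> < d0" if "x \<in> B" for x using that dl unfolding B_def by auto
  have gG: "gf f x = G f (W m) x" if "x \<in> B" for x
    using near_node xB[OF that] unfolding gf_def by (intro g_loc) (auto simp: fin_W)
  have iG: "(\<lambda>x. (G f (W m) x)\<^sup>2) integrable_on B"
    unfolding B_def by (rule integrable_continuous_interval) (intro continuous_intros G_cont[THEN continuous_on_subset]; simp)
  have ig: "(\<lambda>x. (gf f x)\<^sup>2) integrable_on B" by (rule integrable_eq[OF iG]) (simp add: gG)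
  have "integral B (\<lambda>x. c) \<le> integral B (\<lambda>x. (gf f x)\<^sup>2)"
  proof (rule integral_le)
    show "(\<lambda>x. c) integrable_on B" unfolding B_def by (intro integrable_continuous_interval continuous_on_const)
    show "c \<le> (gf f x)\<^sup>2" if "x \<in> B" for x
      unfolding gG[OF that] c_def by (rule pt_lower[OF eps _ Imax]) (use xB[OF that] in auto)
  qed (rule ig)
  moreover have "integral B (\<lambda>x. c) = Henstock_Kurzweil_Integration.content B * c"
    unfolding B_def integral_const_real by simp
  moreover have "Henstock_Kurzweil_Integration.content B = 2 * dl" unfolding B_def using dl by (simp add: content_real)
  ultimately have i1: "2 * dl * c \<le> integral B (\<lambda>x. (gf f x)\<^sup>2)" by simp
  have eqU: "integral UNIV (\<lambda>x. if x \<in> B then (gf f x)\<^sup>2 else 0) = integral B (\<lambda>x. (gf f x)\<^sup>2)"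
    by (rule integral_restrict_UNIV)
  have intU: "(\<lambda>x. if x \<in> B then (gf f x)\<^sup>2 else 0) integrable_on UNIV"
    by (rule iffD2[OF integrable_restrict_UNIV ig])
  have "(\<lambda>x. if x \<in> B then (gf f x)\<^sup>2 else 0) integrable_on UNIV \<and>
        integral UNIV (\<lambda>x. if x \<in> B then (gf f x)\<^sup>2 else 0) \<ge> 2 * dl * c"
    using intU eqU i1 by simp
  then show ?thesis unfolding B_def c_def .
qed

lemma balls_disjoint:
  assumes dl: "0 < dl" "dl \<le> d0 / 4" and x: "x \<in> {t m1 - dl .. t m1 + dl}" "x \<in> {t m2 - dl .. t m2 + dl}"
  shows "m1 = m2"
proof (rule ccontr)
  assume "m1 \<noteq> m2"
  then consider "m1 < m2" | "m2 < m1" by linarith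
  then show False
  proof cases
    case 1 then show False using t_gap2[OF 1] x dl d0_pos by auto
  next
    case 2 then show False using t_gap2[OF 2] x dl d0_pos by auto
  qed
qed

lemma sum_balls:
  assumes dl: "0 < dl" "dl \<le> d0 / 4" and F: "finite F"
    and ig: "(\<lambda>x. (gf f x)\<^sup>2) integrable_on UNIV"
    and ib: "\<And>m. (\<lambda>x. if x \<in> {t m - dl .. t m + dl} then (gf f x)\<^sup>2 else 0) integrable_on UNIV"
  shows "(\<Sum>m\<in>F. integral UNIV (\<lambda>x. if x \<in> {t m - dl .. t m + dl} then (gf f x)\<^sup>2 else 0))
         \<le> integral UNIV (\<lambda>x. (gf f x)\<^sup>2)"
proof -
  have "(\<Sum>m\<in>F. integral UNIV (\<lambda>x. if x \<in> {t m - dl .. t m + dl} then (gf f x)\<^sup>2 else 0)) =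
        integral UNIV (\<lambda>x. \<Sum>m\<in>F. if x \<in> {t m - dl .. t m + dl} then (gf f x)\<^sup>2 else 0)"
    by (rule integral_sum[OF F ib, symmetric])
  also have "\<dots> \<le> integral UNIV (\<lambda>x. (gf f x)\<^sup>2)"
  proof (rule integral_le[OF integrable_sum[OF F ib] ig])
    fix x
    define F' where "F' = {m\<in>F. x \<in> {t m - dl .. t m + dl}}"
    have fF': "finite F'" unfolding F'_def using F by simp
    have "(\<Sum>m\<in>F. if x \<in> {t m - dl .. t m + dl} then (gf f x)\<^sup>2 else 0) = (\<Sum>m\<in>F'. (gf f x)\<^sup>2)"
      unfolding F'_def by (rule sum.inter_filter[OF F, symmetric])
    also have "\<dots> = real (card F') * (gf f x)\<^sup>2" by simp
    also have "\<dots> \<le> 1 * (gf f x)\<^sup>2"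
    proof (rule mult_right_mono)
      have "\<forall>a\<in>F'. \<forall>b\<in>F'. a = b" using balls_disjoint[OF dl] unfolding F'_def by blast
      then have "card F' \<le> Suc 0" using card_le_Suc0_iff_eq[OF fF'] by blast
      then show "real (card F') \<le> 1" by simp
    qed simp
    finally show "(\<Sum>m\<in>F. if x \<in> {t m - dl .. t m + dl} then (gf f x)\<^sup>2 else 0) \<le> (gf f x)\<^sup>2" by simp
  qed
  finally show ?thesis .
qed

end

lemma fsupp_bound:
  assumes "\<And>x. h x \<noteq> 0 \<Longrightarrow> a < x \<and> x < b" "a \<le> b"
  shows "fsupp h \<subseteq> {a..b}" "emeasure lborel (fsupp h) \<le> ennreal (b - a)"
proof -
  show s: "fsupp h \<subseteq> {a..b}" unfolding fsupp_def
  proof (rule closure_minimal)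
    show "{x. h x \<noteq> 0} \<subseteq> {a..b}"
    proof
      fix x assume "x \<in> {x. h x \<noteq> 0}"
      then have "a < x \<and> x < b" using assms(1) by blast
      then show "x \<in> {a..b}" by simp
    qed
  qed simp
  have "emeasure lborel (fsupp h) \<le> emeasure lborel {a..b}" by (rule emeasure_mono[OF s]) simp
  then show "emeasure lborel (fsupp h) \<le> ennreal (b - a)" using assms(2) by simp
qed

context dd2 begin

lemma riesz_lower:
  "\<exists>A>0. \<forall>f. (\<lambda>k. (f k)\<^sup>2) summable_on UNIV \<longrightarrow> A * (\<Sum>\<^sub>\<infinity>k. (f k)\<^sup>2) \<le> integral UNIV (\<lambda>x. (gf f x)\<^sup>2)"
proof -
  obtain Imin Imax where I: "0 < Imin" "\<And>k. Imin \<le> Ii k \<and> Ii k \<le> Imax" using Ii_bounds by blast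
  have Imax: "\<And>k. Ii k \<le> Imax" using I by blast
  have Imax0: "Imax > 0" using I(1) I(2)[of 0] by linarith
  obtain Q where Q: "Q \<ge> 0" "\<And>k. integral UNIV (\<lambda>x. (\<Psi> k x)\<^sup>2) \<le> Q" using Phi_sq_bound by blast
  define q where "q = 4 * real n - 1"
  have q0: "q > 0" unfolding q_def using n1 by simp
  define e where "e = 1 / (2 * q * sqrt Imax)"
  have e0: "e > 0" unfolding e_def using q0 Imax0 by simp
  have eq2: "e\<^sup>2 * q\<^sup>2 = 1 / (4 * Imax)"
    unfolding e_def using q0 Imax0 by (simp add: power_divide power_mult_distrib field_simps)
  obtain d where d: "d > 0" "\<And>k x y. \<bar>x - y\<bar> < d \<Longrightarrow> \<bar>\<Psi> k x - \<Psi> k y\<bar> < e"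
    using Phi_equicont[OF e0] by blast
  define dl where "dl = min (d/2) (d0/4)"
  have dl: "0 < dl" "dl < d" "dl < d0" "dl \<le> d0 / 4" unfolding dl_def using d(1) d0_pos by auto
  define r where "r = dl / Imax"
  have r0: "r > 0" unfolding r_def using dl Imax0 by simp
  have "\<forall>f. (\<lambda>k. (f k)\<^sup>2) summable_on UNIV \<longrightarrow> (r/2) * (\<Sum>\<^sub>\<infinity>k. (f k)\<^sup>2) \<le> integral UNIV (\<lambda>x. (gf f x)\<^sup>2)"
  proof (intro allI impI)
    fix f :: "int \<Rightarrow> real"
    assume sf: "(\<lambda>k. (f k)\<^sup>2) summable_on UNIV"
    let ?S = "(\<Sum>\<^sub>\<infinity>k. (f k)\<^sup>2)"
    define Z where "Z = integral UNIV (\<lambda>x. (gf f x)\<^sup>2)"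
    have ig: "(\<lambda>x. (gf f x)\<^sup>2) integrable_on UNIV" using g_sq_upper[OF sf Q] by blast
    have ib: "(\<lambda>x. if x \<in> {t m - dl .. t m + dl} then (gf f x)\<^sup>2 else 0) integrable_on UNIV" for m
      using ball_lower[OF d(2) dl(1-3) Imax] by blast
    have fin_bound: "(\<Sum>m\<in>F. (f m)\<^sup>2) \<le> Z / r + ?S / 2" if F: "finite F" "F \<subseteq> UNIV" for F
    proof -
      define X where "X = (\<Sum>m\<in>F. (f m)\<^sup>2)"
      define Y where "Y = (\<Sum>m\<in>F. \<Sum>k\<in>W m. (f k)\<^sup>2)"
      have "(\<Sum>m\<in>F. 2 * dl * ((f m)\<^sup>2 / (2 * Imax) - e\<^sup>2 * (4 * real n - 1) * (\<Sum>k\<in>W m. (f k)\<^sup>2)))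
            \<le> (\<Sum>m\<in>F. integral UNIV (\<lambda>x. if x \<in> {t m - dl .. t m + dl} then (gf f x)\<^sup>2 else 0))"
        by (rule sum_mono) (use ball_lower[OF d(2) dl(1-3) Imax] in blast)
      also have "\<dots> \<le> Z" unfolding Z_def by (rule sum_balls[OF dl(1) dl(4) F(1) ig ib])
      finally have z1: "(\<Sum>m\<in>F. 2 * dl * ((f m)\<^sup>2 / (2 * Imax) - e\<^sup>2 * q * (\<Sum>k\<in>W m. (f k)\<^sup>2))) \<le> Z"
        unfolding q_def .
      have "(\<Sum>m\<in>F. 2 * dl * ((f m)\<^sup>2 / (2 * Imax) - e\<^sup>2 * q * (\<Sum>k\<in>W m. (f k)\<^sup>2)))
            = r * X - 2 * dl * e\<^sup>2 * q * Y"
        unfolding X_def Y_def r_def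
        by (simp add: sum_subtractf sum_distrib_left right_diff_distrib sum_divide_distrib mult_ac)
      then have z2: "r * X - 2 * dl * e\<^sup>2 * q * Y \<le> Z" using z1 by simp
      have "Y \<le> q * ?S" unfolding Y_def q_def by (rule dbl_sum[OF sf F(1)])
      then have "2 * dl * e\<^sup>2 * q * Y \<le> 2 * dl * e\<^sup>2 * q * (q * ?S)"
        by (rule mult_left_mono) (use dl q0 in auto)
      also have "\<dots> = 2 * dl * (e\<^sup>2 * q\<^sup>2) * ?S" by (simp add: power2_eq_square mult_ac)
      also have "\<dots> = r * ?S / 2" unfolding eq2 r_def by simp
      finally have "r * X \<le> Z + r * ?S / 2" using z2 by linarith
      then have "X \<le> (Z + r * ?S / 2) / r" using r0 by (simp add: pos_le_divide_eq mult.commute)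
      also have "\<dots> = Z / r + ?S / 2" using r0 by (simp add: field_simps)
      finally show ?thesis unfolding X_def .
    qed
    have "?S \<le> Z / r + ?S / 2" by (rule infsum_le_finite_sums[OF sf]) (use fin_bound in blast)
    then have "?S / 2 \<le> Z / r" by linarith
    then have "r * (?S / 2) \<le> Z" using r0 by (simp add: le_divide_eq mult.commute)
    then show "(r/2) * (\<Sum>\<^sub>\<infinity>k. (f k)\<^sup>2) \<le> integral UNIV (\<lambda>x. (gf f x)\<^sup>2)"
      unfolding Z_def by (simp add: mult_ac)
  qed
  then show ?thesis using r0 by (intro exI[of _ "r/2"]) auto
qed

lemma riesz:
  "\<exists>A B. 0 < A \<and> A \<le> B \<and>
        (\<forall>f :: int \<Rightarrow> real. (\<lambda>k. (f k)\<^sup>2) summable_on UNIV \<longrightarrow>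
           (\<lambda>x. (gf f x)\<^sup>2) integrable_on UNIV \<and>
           A * (\<Sum>\<^sub>\<infinity>k. (f k)\<^sup>2) \<le> integral UNIV (\<lambda>x. (gf f x)\<^sup>2) \<and>
           integral UNIV (\<lambda>x. (gf f x)\<^sup>2) \<le> B * (\<Sum>\<^sub>\<infinity>k. (f k)\<^sup>2))"
proof -
  obtain A where A: "A > 0" "\<And>f. (\<lambda>k. (f k)\<^sup>2) summable_on UNIV \<Longrightarrow> A * (\<Sum>\<^sub>\<infinity>k. (f k)\<^sup>2) \<le> integral UNIV (\<lambda>x. (gf f x)\<^sup>2)"
    using riesz_lower by blast
  obtain Q where Q: "Q \<ge> 0" "\<And>k. integral UNIV (\<lambda>x. (\<Psi> k x)\<^sup>2) \<le> Q" using Phi_sq_bound by blast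
  define B where "B = max A ((4 * real n - 1) * Q)"
  have "(\<lambda>x. (gf f x)\<^sup>2) integrable_on UNIV \<and>
           A * (\<Sum>\<^sub>\<infinity>k. (f k)\<^sup>2) \<le> integral UNIV (\<lambda>x. (gf f x)\<^sup>2) \<and>
           integral UNIV (\<lambda>x. (gf f x)\<^sup>2) \<le> B * (\<Sum>\<^sub>\<infinity>k. (f k)\<^sup>2)"
    if sf: "(\<lambda>k. (f k)\<^sup>2) summable_on UNIV" for f
  proof -
    have u: "(\<lambda>x. (gf f x)\<^sup>2) integrable_on UNIV \<and>
         integral UNIV (\<lambda>x. (gf f x)\<^sup>2) \<le> (4 * real n - 1) * Q * (\<Sum>\<^sub>\<infinity>k. (f k)\<^sup>2)"
      by (rule g_sq_upper[OF sf Q])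
    have S0: "(\<Sum>\<^sub>\<infinity>k. (f k)\<^sup>2) \<ge> 0" by (rule infsum_nonneg) simp
    have "(4 * real n - 1) * Q * (\<Sum>\<^sub>\<infinity>k. (f k)\<^sup>2) \<le> B * (\<Sum>\<^sub>\<infinity>k. (f k)\<^sup>2)"
      unfolding B_def by (rule mult_right_mono[OF _ S0]) simp
    then show ?thesis using u A(2)[OF sf] by linarith
  qed
  moreover have "A \<le> B" unfolding B_def by simp
  ultimately show ?thesis using A(1) by blast
qed

definition Lc where "Lc = real_of_int (4 * int n - 2) * (hl + hr)"

lemma supp_len: "t (k + 2*int n - 1) - t (k - 2*int n + 1) \<le> Lc"
  unfolding Lc_def using t_diff[of "k - 2*int n + 1" "k + 2*int n - 1"] n1 by (simp add: algebra_simps)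

lemma supp_le: "t (k - 2*int n + 1) \<le> t (k + 2*int n - 1)" using n1 by (simp add: t_le_iff)

lemma supp_measure: "(SUP k. emeasure lborel (fsupp (\<Psi> k))) < \<infinity>"
proof -
  have "emeasure lborel (fsupp (\<Psi> k)) \<le> ennreal Lc" for k
  proof -
    have "emeasure lborel (fsupp (\<Psi> k)) \<le> ennreal (t (k + 2*int n - 1) - t (k - 2*int n + 1))"
      by (rule fsupp_bound(2)[OF Phi_nz supp_le])
    also have "\<dots> \<le> ennreal Lc" by (rule ennreal_leI[OF supp_len])
    finally show ?thesis .
  qed
  then have "(SUP k. emeasure lborel (fsupp (\<Psi> k))) \<le> ennreal Lc" by (rule SUP_least)
  also have "\<dots> < \<infinity>" by simp
  finally show ?thesis .
qed

lemma supp_overlap: "\<exists>s::nat. \<forall>I :: int set. (infinite I \<or> s < card I) \<longrightarrow> (\<Inter>k\<in>I. fsupp (\<Psi> k)) = {}"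
proof (intro exI[of _ "4 * n - 1"] allI impI)
  fix I :: "int set"
  assume I: "infinite I \<or> 4 * n - 1 < card I"
  show "(\<Inter>k\<in>I. fsupp (\<Psi> k)) = {}"
  proof (rule ccontr)
    assume "(\<Inter>k\<in>I. fsupp (\<Psi> k)) \<noteq> {}"
    then obtain x where x: "\<And>k. k \<in> I \<Longrightarrow> x \<in> fsupp (\<Psi> k)" by blast
    obtain m where m: "t m / 2^0 \<le> x" "x < t (m+1) / 2^0" using cell_exists[of 0 x] by blast
    have "I \<subseteq> W m"
    proof
      fix k assume k: "k \<in> I"
      have "x \<in> {t (k - 2*int n + 1) .. t (k + 2*int n - 1)}"
        using fsupp_bound(1)[OF Phi_nz supp_le] x[OF k] by blast
      then have "t (k - 2*int n + 1) < t (m+1)" "t m \<le> t (k + 2*int n - 1)" using m by auto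
      then have "k - 2*int n + 1 < m + 1" "m \<le> k + 2*int n - 1" using t_less_iff t_le_iff by blast+
      then show "k \<in> W m" unfolding W_def by auto
    qed
    then have fI: "finite I" using fin_W finite_subset by blast
    have "card I \<le> card (W m)" by (rule card_mono[OF fin_W \<open>I \<subseteq> W m\<close>])
    also have "card (W m) = 4 * n - 1" using card_W[of m] n1 by linarith
    finally show False using I fI by simp
  qed
qed

lemma supp_scaled: "(\<lambda>j::nat. SUP k. emeasure lborel (fsupp (\<lambda>x. \<Psi> k (2 ^ j * x)))) \<longlonglongrightarrow> 0"
proof (rule tendsto_sandwich[of "\<lambda>_. 0" _ _ "\<lambda>j. ennreal (Lc / 2^j)"])
  show "\<forall>\<^sub>F j in sequentially. 0 \<le> (SUP k. emeasure lborel (fsupp (\<lambda>x. \<Psi> k (2 ^ j * x))))" by simp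
  show "\<forall>\<^sub>F j in sequentially. (SUP k. emeasure lborel (fsupp (\<lambda>x. \<Psi> k (2 ^ j * x)))) \<le> ennreal (Lc / 2^j)"
  proof (intro always_eventually allI SUP_least)
    fix j :: nat and k
    have nz: "t (k - 2*int n + 1) / 2^j < x \<and> x < t (k + 2*int n - 1) / 2^j" if "\<Psi> k (2^j * x) \<noteq> 0" for x
    proof -
      have "t (k - 2*int n + 1) < 2^j * x \<and> 2^j * x < t (k + 2*int n - 1)" using Phi_nz[OF that] .
      then show ?thesis by (simp add: field_simps)
    qed
    have le: "t (k - 2*int n + 1) / 2^j \<le> t (k + 2*int n - 1) / 2^j" using supp_le by (simp add: divide_right_mono)
    have "emeasure lborel (fsupp (\<lambda>x. \<Psi> k (2 ^ j * x))) \<le>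
          ennreal (t (k + 2*int n - 1) / 2^j - t (k - 2*int n + 1) / 2^j)"
      by (rule fsupp_bound(2)[OF nz le])
    also have "\<dots> \<le> ennreal (Lc / 2^j)"
    proof (rule ennreal_leI)
      have "t (k + 2*int n - 1) / 2^j - t (k - 2*int n + 1) / 2^j = (t (k + 2*int n - 1) - t (k - 2*int n + 1)) / 2^j"
        by (simp add: diff_divide_distrib)
      also have "\<dots> \<le> Lc / 2^j" by (rule divide_right_mono[OF supp_len]) simp
      finally show "t (k + 2*int n - 1) / 2^j - t (k - 2*int n + 1) / 2^j \<le> Lc / 2^j" .
    qed
    finally show "emeasure lborel (fsupp (\<lambda>x. \<Psi> k (2 ^ j * x))) \<le> ennreal (Lc / 2^j)" .
  qed
  show "(\<lambda>_. 0) \<longlonglongrightarrow> (0::ennreal)" by simp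
  have "(\<lambda>j. Lc / 2^j) \<longlonglongrightarrow> 0" by (rule LIMSEQ_divide_realpow_zero) simp
  then have "(\<lambda>j. ennreal (Lc / 2^j)) \<longlonglongrightarrow> ennreal 0" by (rule tendsto_ennrealI)
  then show "(\<lambda>j. ennreal (Lc / 2^j)) \<longlonglongrightarrow> 0" by simp
qed

end


theorem lemma1:
  fixes n :: nat and hl hr :: real and \<phi> :: "int \<Rightarrow> real \<Rightarrow> real"
  assumes n: "n \<ge> 1" and hl: "hl > 0" and hr: "hr > 0"
    and limit: "\<And>k. continuous_on UNIV (\<phi> k) \<and>
                 uniform_limit UNIV (\<lambda>j. DD_level hl hr n j (unit_seq k)) (\<phi> k) sequentially"
    and pos_int: "\<And>k. integral UNIV (\<phi> k) > 0"
  defines "\<Phi> \<equiv> scaling_fun \<phi>"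
  shows
    "(\<exists>A B. 0 < A \<and> A \<le> B \<and>
        (\<forall>f :: int \<Rightarrow> real. (\<lambda>k. (f k)\<^sup>2) summable_on UNIV \<longrightarrow>
           (\<lambda>x. (\<Sum>\<^sub>\<infinity>k. f k * \<Phi> k x)\<^sup>2) integrable_on UNIV \<and>
           A * (\<Sum>\<^sub>\<infinity>k. (f k)\<^sup>2) \<le> integral UNIV (\<lambda>x. (\<Sum>\<^sub>\<infinity>k. f k * \<Phi> k x)\<^sup>2) \<and>
           integral UNIV (\<lambda>x. (\<Sum>\<^sub>\<infinity>k. f k * \<Phi> k x)\<^sup>2) \<le> B * (\<Sum>\<^sub>\<infinity>k. (f k)\<^sup>2)))
   \<and> (\<exists>M. \<forall>k x. \<bar>\<Phi> k x\<bar> \<le> M)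
   \<and> (SUP k. emeasure lborel (fsupp (\<Phi> k))) < \<infinity>
   \<and> (\<exists>s::nat. \<forall>I :: int set. (infinite I \<or> s < card I) \<longrightarrow> (\<Inter>k\<in>I. fsupp (\<Phi> k)) = {})
   \<and> ((\<lambda>j::nat. SUP k. emeasure lborel (fsupp (\<lambda>x. \<Phi> k (2 ^ j * x)))) \<longlonglongrightarrow> 0)"
  proof -
  interpret dd2 hl hr n \<phi>
    by unfold_locales (use n hl hr limit pos_int in auto)
  show ?thesis
    unfolding \<Phi>_def
    using riesz[unfolded gf_def] Phi_bounded supp_measure supp_overlap supp_scaled
    by blast
qed

end
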